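(* (i) For any $\beta\in N$, $\mathbb C[K^\circ,\Sigma]\subset M(\beta)\subset\mathbb C[K,\Sigma]$. (ii) If $\beta\in-K^\circ$, then $M(\beta)=\mathbb C[K^\circ,\Sigma]$.
   Context: $N\cong\mathbb Z^d$ lattice, $\mathcal A=\{v_1,\dots,v_n\}\subset N$ generating $N$ with a homomorphism $\mathrm h:N\to\mathbb Z$, $\mathrm h(v_j)=1$; $K=\mathbb R_{\ge0}\mathrm{Conv}(\mathcal A)$, $K^\circ$ its interior; $\Sigma$ the simplicial fan supported on $K$ from a regular triangulation with vertices in $\mathcal A$. $\mathbb C[K,\Sigma]$: basis $x^w$ ($w\in K\cap N$), $x^{w_1}x^{w_2}=x^{w_1+w_2}$ if some cone of $\Sigma$ contains both, else $0$; $\mathbb C[K^\circ,\Sigma]$ the ideal spanned by $x^w$, $w\in K^\circ\cap N$. $\mathrm{Box}(\Sigma)$: $v=\sum q_jv_j\in N$, $0\le q_j<1$, $q_j=0$ unless $v_j$ spans a ray of a fixed maximal cone; $\sigma(v)$ smallest cone containing $v$. $R$: subring generated by $x^{v_j}$, $\mathbb R_{\ge0}v_j\in\Sigma$. $M(\beta)$: the $R$-submodule generated by $x^v\prod_{j:r_j<0,\ \mathbb R_{\ge0}v_j\in\Sigma,\ \mathbb R_{\ge0}v_j\not\prec\sigma(v)}x^{v_j}$ for all $v\in\mathrm{Box}(\Sigma)$, $r\in\mathbb Z^n$ with $v+\sum r_jv_j=\beta$ and $r_j\ge0$ whenever $\mathbb R_{\ge0}v_j\notin\Sigma$. *)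

theory Defs
  imports "HOL-Analysis.Analysis"
begin

text \<open>The lattice N is realised as the integer points of real^'d (so N = Z^d
  inside N_R = R^d). The set A = {v_0,...,v_(n-1)} is given by an injective family
  vs :: nat => real^'d on {..<n}. Elements of C[K,Sigma] are finitely supported
  functions from lattice points to complex numbers (coefficient of x^w).\<close>

definition lattice :: "(real^'d) set" where
  "lattice = {x. \<forall>i. x $ i \<in> \<int>}"

definition Kcone :: "(nat \<Rightarrow> real^'d) \<Rightarrow> nat \<Rightarrow> (real^'d) set" where
  "Kcone vs n = {t *\<^sub>R x | t x. t \<ge> 0 \<and> x \<in> convex hull (vs ` {..<n})}"

text \<open>Cells of the regular subdivision induced by heights om: the label sets of the
  lower faces of the lifted point configuration (linear functionals suffice since all
  v_j lie on the hyperplane h = 1).\<close>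
definition cells :: "(nat \<Rightarrow> real^'d) \<Rightarrow> nat \<Rightarrow> (nat \<Rightarrow> real) \<Rightarrow> nat set set" where
  "cells vs n om =
     {{j \<in> {..<n}. a \<bullet> vs j = om j} | a. \<forall>j<n. a \<bullet> vs j \<le> om j}"

definition regular_triangulation :: "(nat \<Rightarrow> real^'d) \<Rightarrow> nat \<Rightarrow> (nat \<Rightarrow> real) \<Rightarrow> bool" where
  "regular_triangulation vs n om \<longleftrightarrow>
     (\<forall>S \<in> cells vs n om. independent (vs ` S) \<and> inj_on vs S)"

definition cone_of :: "(nat \<Rightarrow> real^'d) \<Rightarrow> nat set \<Rightarrow> (real^'d) set" where
  "cone_of vs S = {\<Sum>j\<in>S. c j *\<^sub>R vs j | c. \<forall>j\<in>S. c j \<ge> 0}"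

definition fan :: "(nat \<Rightarrow> real^'d) \<Rightarrow> nat \<Rightarrow> (nat \<Rightarrow> real) \<Rightarrow> (real^'d) set set" where
  "fan vs n om = cone_of vs ` cells vs n om"

definition ray :: "(nat \<Rightarrow> real^'d) \<Rightarrow> nat \<Rightarrow> (real^'d) set" where
  "ray vs j = {c *\<^sub>R vs j | c. c \<ge> 0}"

definition compat :: "(nat \<Rightarrow> real^'d) \<Rightarrow> nat \<Rightarrow> (nat \<Rightarrow> real) \<Rightarrow> real^'d \<Rightarrow> real^'d \<Rightarrow> bool" where
  "compat vs n om w1 w2 \<longleftrightarrow> (\<exists>\<sigma> \<in> fan vs n om. w1 \<in> \<sigma> \<and> w2 \<in> \<sigma>)"

definition mono :: "real^'d \<Rightarrow> (real^'d \<Rightarrow> complex)" where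
  "mono w = (\<lambda>u. if u = w then 1 else 0)"

text \<open>Multiplication of C[K,Sigma], the bilinear extension of
  x^w1 x^w2 = x^(w1+w2) if some cone contains w1, w2 and 0 otherwise.\<close>
definition kmult :: "(nat \<Rightarrow> real^'d) \<Rightarrow> nat \<Rightarrow> (nat \<Rightarrow> real)
     \<Rightarrow> (real^'d \<Rightarrow> complex) \<Rightarrow> (real^'d \<Rightarrow> complex) \<Rightarrow> (real^'d \<Rightarrow> complex)" where
  "kmult vs n om f g = (\<lambda>w. \<Sum>(a, b) \<in> {(a, b). f a \<noteq> 0 \<and> g b \<noteq> 0 \<and> a + b = w
        \<and> compat vs n om a b}. f a * g b)"

definition kprod_list :: "(nat \<Rightarrow> real^'d) \<Rightarrow> nat \<Rightarrow> (nat \<Rightarrow> real)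
     \<Rightarrow> (real^'d \<Rightarrow> complex) list \<Rightarrow> (real^'d \<Rightarrow> complex)" where
  "kprod_list vs n om fs = foldr (kmult vs n om) fs (mono 0)"

definition CK :: "(nat \<Rightarrow> real^'d) \<Rightarrow> nat \<Rightarrow> (real^'d \<Rightarrow> complex) set" where
  "CK vs n = {f. finite {w. f w \<noteq> 0} \<and> {w. f w \<noteq> 0} \<subseteq> Kcone vs n \<inter> lattice}"

definition CKint :: "(nat \<Rightarrow> real^'d) \<Rightarrow> nat \<Rightarrow> (real^'d \<Rightarrow> complex) set" where
  "CKint vs n = {f. finite {w. f w \<noteq> 0} \<and> {w. f w \<noteq> 0} \<subseteq> interior (Kcone vs n) \<inter> lattice}"

inductive_set Rsub :: "(nat \<Rightarrow> real^'d) \<Rightarrow> nat \<Rightarrow> (nat \<Rightarrow> real) \<Rightarrow> (real^'d \<Rightarrow> complex) set"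
  for vs n om where
  const: "(\<lambda>u. c * mono 0 u) \<in> Rsub vs n om"
| gen: "j < n \<Longrightarrow> ray vs j \<in> fan vs n om \<Longrightarrow> mono (vs j) \<in> Rsub vs n om"
| add: "f \<in> Rsub vs n om \<Longrightarrow> g \<in> Rsub vs n om \<Longrightarrow> (\<lambda>u. f u + g u) \<in> Rsub vs n om"
| mult: "f \<in> Rsub vs n om \<Longrightarrow> g \<in> Rsub vs n om \<Longrightarrow> kmult vs n om f g \<in> Rsub vs n om"

inductive_set Rspan :: "(nat \<Rightarrow> real^'d) \<Rightarrow> nat \<Rightarrow> (nat \<Rightarrow> real) \<Rightarrow> (real^'d \<Rightarrow> complex) set
     \<Rightarrow> (real^'d \<Rightarrow> complex) set"
  for vs n om G where
  zero: "(\<lambda>u. 0) \<in> Rspan vs n om G"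
| smul: "r \<in> Rsub vs n om \<Longrightarrow> g \<in> G \<Longrightarrow> kmult vs n om r g \<in> Rspan vs n om G"
| add: "f \<in> Rspan vs n om G \<Longrightarrow> g \<in> Rspan vs n om G \<Longrightarrow> (\<lambda>u. f u + g u) \<in> Rspan vs n om G"

definition sigma_of :: "(nat \<Rightarrow> real^'d) \<Rightarrow> nat \<Rightarrow> (nat \<Rightarrow> real) \<Rightarrow> real^'d \<Rightarrow> (real^'d) set" where
  "sigma_of vs n om x = (THE \<sigma>. \<sigma> \<in> fan vs n om \<and> x \<in> \<sigma> \<and>
       (\<forall>\<tau> \<in> fan vs n om. x \<in> \<tau> \<longrightarrow> \<sigma> \<subseteq> \<tau>))"

definition maximal_cone :: "(nat \<Rightarrow> real^'d) \<Rightarrow> nat \<Rightarrow> (nat \<Rightarrow> real) \<Rightarrow> (real^'d) set \<Rightarrow> bool" where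
  "maximal_cone vs n om \<sigma> \<longleftrightarrow> \<sigma> \<in> fan vs n om \<and> (\<forall>\<tau> \<in> fan vs n om. \<sigma> \<subseteq> \<tau> \<longrightarrow> \<tau> = \<sigma>)"

definition Box :: "(nat \<Rightarrow> real^'d) \<Rightarrow> nat \<Rightarrow> (nat \<Rightarrow> real) \<Rightarrow> (real^'d) set" where
  "Box vs n om = {x \<in> lattice. \<exists>\<sigma>. maximal_cone vs n om \<sigma> \<and>
      (\<exists>q. x = (\<Sum>j<n. q j *\<^sub>R vs j) \<and> (\<forall>j<n. 0 \<le> q j \<and> q j < 1)
           \<and> (\<forall>j<n. q j \<noteq> 0 \<longrightarrow> ray vs j face_of \<sigma>))}"

definition Mgens :: "(nat \<Rightarrow> real^'d) \<Rightarrow> nat \<Rightarrow> (nat \<Rightarrow> real) \<Rightarrow> real^'d \<Rightarrow> (real^'d \<Rightarrow> complex) set" where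
  "Mgens vs n om \<beta> =
     {kmult vs n om (mono x)
        (kprod_list vs n om (map (\<lambda>j. mono (vs j))
           (sorted_list_of_set {j. j < n \<and> r j < 0 \<and> ray vs j \<in> fan vs n om
                                   \<and> \<not> (ray vs j face_of sigma_of vs n om x)})))
      | x r. x \<in> Box vs n om \<and> x + (\<Sum>j<n. of_int (r j) *\<^sub>R vs j) = \<beta>
             \<and> (\<forall>j<n. ray vs j \<notin> fan vs n om \<longrightarrow> r j \<ge> 0)}"

definition Mmod :: "(nat \<Rightarrow> real^'d) \<Rightarrow> nat \<Rightarrow> (nat \<Rightarrow> real) \<Rightarrow> real^'d \<Rightarrow> (real^'d \<Rightarrow> complex) set" where
  "Mmod vs n om \<beta> = Rspan vs n om (Mgens vs n om \<beta>)"

end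

theory Submission
  imports Defs
begin


lemma linear_rep:
  assumes "linear (g::real^'d \<Rightarrow> real)"
  shows "g x = (\<Sum>i\<in>Basis. g i *\<^sub>R i) \<bullet> x"
proof -
  have "g x = g (\<Sum>i\<in>Basis. (x \<bullet> i) *\<^sub>R i)" by (simp add: euclidean_representation)
  also have "\<dots> = (\<Sum>i\<in>Basis. (x \<bullet> i) * g i)" using assms by (simp add: linear_sum linear_cmul)
  also have "\<dots> = (\<Sum>i\<in>Basis. g i *\<^sub>R i) \<bullet> x" by (simp add: inner_sum_right inner_commute mult.commute)
  finally show ?thesis .
qed

locale ctx =
  fixes vs :: "nat \<Rightarrow> real^'d" and n :: nat and hc :: "real^'d" and om :: "nat \<Rightarrow> real"
  assumes vs_lattice: "\<forall>j<n. vs j \<in> lattice"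
    and vs_inj: "inj_on vs {..<n}"
    and generates: "\<forall>x \<in> lattice. \<exists>a :: nat \<Rightarrow> int. x = (\<Sum>j<n. of_int (a j) *\<^sub>R vs j)"
    and h_one: "\<forall>j<n. hc \<bullet> vs j = 1"
    and triang: "regular_triangulation vs n om"
begin

abbreviation "C \<equiv> cells vs n om"
abbreviation "cn \<equiv> cone_of vs"

lemma n_pos: "n > 0"
proof (rule ccontr)
  assume "\<not> n > 0"
  hence n0: "n = 0" by simp
  have "(\<chi> i. (1::real)) \<in> lattice" by (simp add: lattice_def)
  then obtain a :: "nat \<Rightarrow> int" where "(\<chi> i. (1::real)) = (\<Sum>j<n. of_int (a j) *\<^sub>R vs j)"
    using generates by blast
  hence "(\<chi> i. (1::real)) = (0::real^'d)" using n0 by simp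
  moreover have "(\<chi> i. (1::real)) \<noteq> (0::real^'d)" by (simp add: vec_eq_iff)
  ultimately show False by blast
qed

lemma cellE:
  assumes "S \<in> C"
  obtains a where "S = {j \<in> {..<n}. a \<bullet> vs j = om j}" "\<forall>j<n. a \<bullet> vs j \<le> om j"
  using assms by (auto simp: cells_def)

lemma cell_sub: "S \<in> C \<Longrightarrow> S \<subseteq> {..<n}"
  by (auto elim: cellE)

lemma cell_fin: "S \<in> C \<Longrightarrow> finite S"
  using cell_sub finite_subset by blast

lemma cell_ind: "S \<in> C \<Longrightarrow> independent (vs ` S) \<and> inj_on vs S"
  using triang by (auto simp: regular_triangulation_def)

lemma cell_Int:
  assumes "S1 \<in> C" "S2 \<in> C" shows "S1 \<inter> S2 \<in> C"
proof -
  obtain a1 where 1: "S1 = {j \<in> {..<n}. a1 \<bullet> vs j = om j}" "\<forall>j<n. a1 \<bullet> vs j \<le> om j"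
    using assms(1) by (rule cellE)
  obtain a2 where 2: "S2 = {j \<in> {..<n}. a2 \<bullet> vs j = om j}" "\<forall>j<n. a2 \<bullet> vs j \<le> om j"
    using assms(2) by (rule cellE)
  define a where "a = (1/2) *\<^sub>R (a1 + a2)"
  have ae: "a \<bullet> vs j = (a1 \<bullet> vs j + a2 \<bullet> vs j) / 2" for j
    by (simp add: a_def inner_add_left)
  have "S1 \<inter> S2 = {j \<in> {..<n}. a \<bullet> vs j = om j}"
  proof (intro set_eqI iffI)
    fix j assume "j \<in> S1 \<inter> S2"
    hence "j < n" "a1 \<bullet> vs j = om j" "a2 \<bullet> vs j = om j" using 1 2 by auto
    thus "j \<in> {j \<in> {..<n}. a \<bullet> vs j = om j}" using ae[of j] by auto
  next
    fix j assume j: "j \<in> {j \<in> {..<n}. a \<bullet> vs j = om j}"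
    hence "j < n" by auto
    hence "a1 \<bullet> vs j \<le> om j" "a2 \<bullet> vs j \<le> om j" using 1 2 by auto
    hence "a1 \<bullet> vs j = om j" "a2 \<bullet> vs j = om j" using j ae[of j] by auto
    thus "j \<in> S1 \<inter> S2" using 1 2 \<open>j < n\<close> by auto
  qed
  moreover have "\<forall>j<n. a \<bullet> vs j \<le> om j"
  proof (intro allI impI)
    fix j assume "j < n"
    hence "a1 \<bullet> vs j \<le> om j" "a2 \<bullet> vs j \<le> om j" using 1(2) 2(2) by auto
    thus "a \<bullet> vs j \<le> om j" unfolding a_def inner_scaleR_left inner_add_left by simp
  qed
  ultimately show ?thesis unfolding cells_def by blast
qed

lemma cell_subset:
  assumes "S \<in> C" "S' \<subseteq> S" shows "S' \<in> C"
proof -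
  obtain a where Sa: "S = {j \<in> {..<n}. a \<bullet> vs j = om j}" and a: "\<forall>j<n. a \<bullet> vs j \<le> om j"
    using assms(1) by (rule cellE)
  have ind: "independent (vs ` S)" and inj: "inj_on vs S" using cell_ind[OF assms(1)] by auto
  obtain g where lg: "linear g" and gv: "\<forall>x\<in>vs`S. g x = (if x \<in> vs ` S' then 0 else (1::real))"
    using linear_independent_extend[OF ind, where f="\<lambda>x. if x \<in> vs ` S' then 0 else (1::real)"] by (elim exE conjE)
  define b where "b = (\<Sum>i\<in>Basis. g i *\<^sub>R i)"
  have gb: "g x = b \<bullet> x" for x unfolding b_def by (rule linear_rep[OF lg])
  define D where "D = {om j - a \<bullet> vs j | j. j < n \<and> j \<notin> S}"
  have finD: "finite D" unfolding D_def by simp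
  define \<delta> where "\<delta> = Min (insert 1 D)"
  have dpos: "\<delta> > 0"
  proof -
    have "\<forall>x\<in>insert 1 D. x > 0" using a Sa by (force simp: D_def)
    thus ?thesis unfolding \<delta>_def using finD by simp
  qed
  have dle: "\<delta> \<le> om j - a \<bullet> vs j" if "j < n" "j \<notin> S" for j
    unfolding \<delta>_def using finD that by (intro Min_le) (auto simp: D_def)
  define M where "M = Max (insert 0 ((\<lambda>j. \<bar>b \<bullet> vs j\<bar>) ` {..<n}))"
  have Mge: "\<bar>b \<bullet> vs j\<bar> \<le> M" if "j < n" for j unfolding M_def using that by (intro Max_ge) auto
  have M0: "M \<ge> 0" unfolding M_def by (intro Max_ge) auto
  define \<epsilon> where "\<epsilon> = \<delta> / (M + 1)"
  have epos: "\<epsilon> > 0" using dpos M0 by (simp add: \<epsilon>_def)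
  have eM: "\<epsilon> * M < \<delta>"
  proof -
    have "\<epsilon> * M = \<delta> * (M / (M + 1))" by (simp add: \<epsilon>_def)
    also have "\<dots> < \<delta> * 1" using dpos M0 by (intro mult_strict_left_mono) auto
    finally show ?thesis by simp
  qed
  define a' where "a' = a - \<epsilon> *\<^sub>R b"
  have key: "(j \<in> S' \<longrightarrow> a' \<bullet> vs j = om j) \<and> (j \<notin> S' \<longrightarrow> a' \<bullet> vs j < om j)" if j: "j < n" for j
  proof (cases "j \<in> S")
    case True
    have aj: "a \<bullet> vs j = om j" using True Sa by auto
    show ?thesis
    proof (cases "j \<in> S'")
      case True
      then have "b \<bullet> vs j = 0" using gv gb \<open>j \<in> S\<close> by auto
      then show ?thesis using True aj by (simp add: a'_def inner_diff_left)
    next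
      case False
      then have "vs j \<notin> vs ` S'" using inj assms(2) \<open>j \<in> S\<close> by (auto simp: inj_on_def)
      then have "b \<bullet> vs j = 1" using gv gb \<open>j \<in> S\<close> by auto
      then show ?thesis using False aj epos by (simp add: a'_def inner_diff_left)
    qed
  next
    case False
    then have "j \<notin> S'" using assms(2) by auto
    have "a' \<bullet> vs j = a \<bullet> vs j - \<epsilon> * (b \<bullet> vs j)" by (simp add: a'_def inner_diff_left)
    also have "\<dots> \<le> a \<bullet> vs j + \<epsilon> * M"
    proof -
      have "- (b \<bullet> vs j) \<le> M" using Mge[OF j] by linarith
      hence "\<epsilon> * (- (b \<bullet> vs j)) \<le> \<epsilon> * M" using epos by (intro mult_left_mono) auto
      thus ?thesis by simp
    qed
    also have "\<dots> < om j" using dle[OF j False] eM by linarith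
    finally show ?thesis using \<open>j \<notin> S'\<close> by simp
  qed
  have "S' \<subseteq> {..<n}" using assms cell_sub by blast
  hence "S' = {j \<in> {..<n}. a' \<bullet> vs j = om j}" using key by (auto; smt (verit, best) lessThan_iff subsetD)
  moreover have "\<forall>j<n. a' \<bullet> vs j \<le> om j"
  proof (intro allI impI)
    fix j assume "j < n" from key[OF this] show "a' \<bullet> vs j \<le> om j" by (cases "j \<in> S'") auto
  qed
  ultimately show ?thesis unfolding cells_def by blast
qed

lemma cell_exists: "{} \<in> C"
proof -
  define c where "c = Min (om ` {..<n})"
  have "\<forall>j<n. (c *\<^sub>R hc) \<bullet> vs j \<le> om j" using h_one by (auto simp: c_def)
  hence "{j \<in> {..<n}. (c *\<^sub>R hc) \<bullet> vs j = om j} \<in> C" unfolding cells_def by blast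
  thus ?thesis using cell_subset by blast
qed

lemma coeff_unique:
  assumes "S \<in> C" "(\<Sum>j\<in>S. c j *\<^sub>R vs j) = (\<Sum>j\<in>S. d j *\<^sub>R vs j)" "j \<in> S"
  shows "c j = d j"
proof -
  have ind: "independent (vs ` S)" and inj: "inj_on vs S" using cell_ind[OF assms(1)] by auto
  have fin: "finite S" using cell_fin assms(1) by blast
  define u where "u = (\<lambda>x. c (the_inv_into S vs x) - d (the_inv_into S vs x))"
  have "(\<Sum>x\<in>vs ` S. u x *\<^sub>R x) = (\<Sum>j\<in>S. u (vs j) *\<^sub>R vs j)"
    using inj by (simp add: sum.reindex)
  also have "\<dots> = (\<Sum>j\<in>S. (c j - d j) *\<^sub>R vs j)"
    using inj by (intro sum.cong) (auto simp: u_def the_inv_into_f_f)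
  also have "\<dots> = 0" using assms(2) by (simp add: scaleR_diff_left sum_subtractf)
  finally have "(\<Sum>x\<in>vs ` S. u x *\<^sub>R x) = 0" .
  hence "\<forall>x\<in>vs ` S. u x = 0" using ind fin dependent_finite[of "vs ` S"] by auto
  hence "u (vs j) = 0" using assms(3) by auto
  thus ?thesis using inj assms(3) by (simp add: u_def the_inv_into_f_f)
qed

end

context ctx begin

lemma cone_comb: "(\<forall>j\<in>S. k j \<ge> 0) \<Longrightarrow> (\<Sum>j\<in>S. k j *\<^sub>R vs j) \<in> cn S"
  unfolding cone_of_def by blast

lemma sum_single: "finite T \<Longrightarrow> j \<in> T \<Longrightarrow> (\<Sum>i\<in>T. (if i = j then c else 0) *\<^sub>R vs i) = c *\<^sub>R vs j"
proof -
  assume a: "finite T" "j \<in> T"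
  have "(\<Sum>i\<in>T. (if i = j then c else 0) *\<^sub>R vs i) = (\<Sum>i\<in>T. if i = j then c *\<^sub>R vs i else 0)"
    by (intro sum.cong) auto
  also have "\<dots> = c *\<^sub>R vs j" using a by (simp add: sum.delta)
  finally show ?thesis .
qed

lemma cone_zero: "0 \<in> cn S"
  unfolding cone_of_def by (rule CollectI, rule exI[of _ "\<lambda>_. 0"]) simp

lemma cone_add: assumes "x \<in> cn S" "y \<in> cn S" shows "x + y \<in> cn S"
proof -
  obtain c where c: "x = (\<Sum>j\<in>S. c j *\<^sub>R vs j)" "\<forall>j\<in>S. c j \<ge> 0" using assms(1) by (auto simp: cone_of_def)
  obtain d where d: "y = (\<Sum>j\<in>S. d j *\<^sub>R vs j)" "\<forall>j\<in>S. d j \<ge> 0" using assms(2) by (auto simp: cone_of_def)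
  have "x + y = (\<Sum>j\<in>S. (c j + d j) *\<^sub>R vs j)" using c d by (simp add: scaleR_add_left sum.distrib)
  moreover have "\<forall>j\<in>S. c j + d j \<ge> 0" using c d by auto
  ultimately show ?thesis using cone_comb[of S "\<lambda>j. c j + d j"] by simp
qed

lemma cone_scale: assumes "t \<ge> 0" "x \<in> cn S" shows "t *\<^sub>R x \<in> cn S"
proof -
  obtain c where c: "x = (\<Sum>j\<in>S. c j *\<^sub>R vs j)" "\<forall>j\<in>S. c j \<ge> 0" using assms(2) by (auto simp: cone_of_def)
  have "t *\<^sub>R x = (\<Sum>j\<in>S. (t * c j) *\<^sub>R vs j)" using c by (simp add: scaleR_sum_right)
  moreover have "\<forall>j\<in>S. t * c j \<ge> 0" using c assms(1) by auto
  ultimately show ?thesis using cone_comb[of S "\<lambda>j. t * c j"] by simp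
qed


lemma cone_mono: assumes "T \<subseteq> S" "finite S" shows "cn T \<subseteq> cn S"
proof
  fix x assume "x \<in> cn T"
  then obtain c where c: "x = (\<Sum>j\<in>T. c j *\<^sub>R vs j)" "\<forall>j\<in>T. c j \<ge> 0" by (auto simp: cone_of_def)
  define c' where "c' = (\<lambda>j. if j \<in> T then c j else 0)"
  have "x = (\<Sum>j\<in>S. c' j *\<^sub>R vs j)" unfolding c(1) using assms
    by (intro sum.mono_neutral_cong_left) (auto simp: c'_def)
  moreover have "\<forall>j\<in>S. c' j \<ge> 0" using c by (auto simp: c'_def)
  ultimately show "x \<in> cn S" using cone_comb[of S c'] by simp
qed

lemma cone_gen: assumes "j \<in> S" "finite S" shows "vs j \<in> cn S"
proof -
  have "vs j = (\<Sum>i\<in>S. (if i = j then 1 else 0) *\<^sub>R vs i)"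
    using sum_single[OF assms(2,1), of 1] by simp
  thus ?thesis using cone_comb[of S "\<lambda>i. if i = j then 1 else 0"] by simp
qed

lemma cone_single: "cn {j} = ray vs j"
  unfolding cone_of_def ray_def by auto

lemma K_eq: "Kcone vs n = cn {..<n}"
proof (intro set_eqI iffI)
  fix p assume "p \<in> Kcone vs n"
  then obtain t x where tx: "p = t *\<^sub>R x" "t \<ge> 0" "x \<in> convex hull (vs ` {..<n})"
    by (auto simp: Kcone_def)
  obtain u where u: "\<forall>y\<in>vs ` {..<n}. 0 \<le> u y" "(\<Sum>y\<in>vs ` {..<n}. u y *\<^sub>R y) = x"
    using tx(3) convex_hull_finite[of "vs ` {..<n}"] by auto
  have "x = (\<Sum>j<n. u (vs j) *\<^sub>R vs j)" using u(2) vs_inj by (simp add: sum.reindex)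
  hence "x \<in> cn {..<n}" using u(1) cone_comb[of "{..<n}" "\<lambda>j. u (vs j)"] by auto
  thus "p \<in> cn {..<n}" using tx cone_scale by auto
next
  fix p assume "p \<in> cn {..<n}"
  then obtain c where c: "p = (\<Sum>j<n. c j *\<^sub>R vs j)" "\<forall>j<n. c j \<ge> 0" by (auto simp: cone_of_def)
  define s where "s = (\<Sum>j<n. c j)"
  have s0: "s \<ge> 0" using c(2) by (auto simp: s_def intro: sum_nonneg)
  show "p \<in> Kcone vs n"
  proof (cases "s = 0")
    case True
    hence "\<forall>j<n. c j = 0" using c(2) sum_nonneg_eq_0_iff[of "{..<n}" c] by (simp add: s_def)
    hence "p = 0 *\<^sub>R vs 0" using c(1) by simp
    moreover have "vs 0 \<in> convex hull (vs ` {..<n})" using n_pos by (intro hull_inc) auto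
    ultimately show ?thesis unfolding Kcone_def by blast
  next
    case False
    hence spos: "s > 0" using s0 by simp
    define x where "x = (\<Sum>j<n. (c j / s) *\<^sub>R vs j)"
    have "x \<in> convex hull (vs ` {..<n})" unfolding x_def
    proof (rule convex_sum)
      show "(\<Sum>i<n. c i / s) = 1" using spos by (simp add: s_def sum_divide_distrib[symmetric])
    qed (use c(2) spos in \<open>auto intro: hull_inc\<close>)
    moreover have "p = s *\<^sub>R x" using spos by (simp add: x_def c(1) scaleR_sum_right)
    ultimately show ?thesis unfolding Kcone_def using s0 by blast
  qed
qed

lemma cell_cone_K: "S \<in> C \<Longrightarrow> cn S \<subseteq> Kcone vs n"
  using cone_mono[of S "{..<n}"] cell_sub K_eq by auto

lemma cone_Int: assumes "S1 \<in> C" "S2 \<in> C" shows "cn S1 \<inter> cn S2 = cn (S1 \<inter> S2)"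
proof
  have f1: "finite S1" "finite S2" using assms cell_fin by auto
  have "cn (S1 \<inter> S2) \<subseteq> cn S1" by (rule cone_mono) (use f1 in auto)
  moreover have "cn (S1 \<inter> S2) \<subseteq> cn S2" by (rule cone_mono) (use f1 in auto)
  ultimately show "cn (S1 \<inter> S2) \<subseteq> cn S1 \<inter> cn S2" by blast
next
  show "cn S1 \<inter> cn S2 \<subseteq> cn (S1 \<inter> S2)"
  proof
    fix p assume p: "p \<in> cn S1 \<inter> cn S2"
    obtain la where la: "p = (\<Sum>j\<in>S1. la j *\<^sub>R vs j)" "\<forall>j\<in>S1. la j \<ge> 0" using p by (auto simp: cone_of_def)
    obtain mu where mu: "p = (\<Sum>j\<in>S2. mu j *\<^sub>R vs j)" "\<forall>j\<in>S2. mu j \<ge> 0" using p by (auto simp: cone_of_def)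
    obtain a1 where 1: "S1 = {j \<in> {..<n}. a1 \<bullet> vs j = om j}" "\<forall>j<n. a1 \<bullet> vs j \<le> om j"
      using assms(1) by (rule cellE)
    obtain a2 where 2: "S2 = {j \<in> {..<n}. a2 \<bullet> vs j = om j}" "\<forall>j<n. a2 \<bullet> vs j \<le> om j"
      using assms(2) by (rule cellE)
    have f1: "finite S1" and f2: "finite S2" using assms cell_fin by auto
    define L where "L = (\<Sum>j\<in>S1. la j * om j)"
    define M where "M = (\<Sum>j\<in>S2. mu j * om j)"
    have e1: "a1 \<bullet> p = L"
    proof -
      have "a1 \<bullet> p = (\<Sum>j\<in>S1. la j * (a1 \<bullet> vs j))" by (simp add: la(1) inner_sum_right)
      also have "\<dots> = L" unfolding L_def
      proof (rule sum.cong)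
        fix j assume "j \<in> S1" hence "a1 \<bullet> vs j = om j" using 1(1) by blast
        thus "la j * (a1 \<bullet> vs j) = la j * om j" by simp
      qed simp
      finally show ?thesis .
    qed
    have e2: "a2 \<bullet> p = M"
    proof -
      have "a2 \<bullet> p = (\<Sum>j\<in>S2. mu j * (a2 \<bullet> vs j))" by (simp add: mu(1) inner_sum_right)
      also have "\<dots> = M" unfolding M_def
      proof (rule sum.cong)
        fix j assume "j \<in> S2" hence "a2 \<bullet> vs j = om j" using 2(1) by blast
        thus "mu j * (a2 \<bullet> vs j) = mu j * om j" by simp
      qed simp
      finally show ?thesis .
    qed
    have i1: "a1 \<bullet> p \<le> M"
    proof -
      have "a1 \<bullet> p = (\<Sum>j\<in>S2. mu j * (a1 \<bullet> vs j))" by (simp add: mu(1) inner_sum_right)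
      also have "\<dots> \<le> M" unfolding M_def
      proof (rule sum_mono)
        fix j assume j: "j \<in> S2" hence "j < n" using 2(1) by blast
        hence "a1 \<bullet> vs j \<le> om j" using 1(2) by blast
        thus "mu j * (a1 \<bullet> vs j) \<le> mu j * om j" using mu(2) j by (intro mult_left_mono) auto
      qed
      finally show ?thesis .
    qed
    have i2: "a2 \<bullet> p \<le> L"
    proof -
      have "a2 \<bullet> p = (\<Sum>j\<in>S1. la j * (a2 \<bullet> vs j))" by (simp add: la(1) inner_sum_right)
      also have "\<dots> \<le> L" unfolding L_def
      proof (rule sum_mono)
        fix j assume j: "j \<in> S1" hence "j < n" using 1(1) by blast
        hence "a2 \<bullet> vs j \<le> om j" using 2(2) by blast
        thus "la j * (a2 \<bullet> vs j) \<le> la j * om j" using la(2) j by (intro mult_left_mono) auto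
      qed
      finally show ?thesis .
    qed
    have "(\<Sum>j\<in>S2. mu j * (om j - a1 \<bullet> vs j)) = M - a1 \<bullet> p"
      unfolding mu(1) M_def by (simp add: inner_sum_right right_diff_distrib sum_subtractf)
    also have "\<dots> = 0" using e1 e2 i1 i2 by linarith
    finally have z: "(\<Sum>j\<in>S2. mu j * (om j - a1 \<bullet> vs j)) = 0" .
    have nn: "\<forall>j\<in>S2. mu j * (om j - a1 \<bullet> vs j) \<ge> 0"
    proof
      fix j assume j: "j \<in> S2" hence "j < n" using 2(1) by blast
      hence "a1 \<bullet> vs j \<le> om j" using 1(2) by blast
      thus "mu j * (om j - a1 \<bullet> vs j) \<ge> 0" using mu(2) j by simp
    qed
    have zz: "\<forall>j\<in>S2. mu j * (om j - a1 \<bullet> vs j) = 0"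
      using sum_nonneg_eq_0_iff[OF f2, of "\<lambda>j. mu j * (om j - a1 \<bullet> vs j)"] z nn by simp
    have inS1: "j \<in> S1" if "j \<in> S2" "mu j \<noteq> 0" for j
    proof -
      have "om j - a1 \<bullet> vs j = 0" using zz that by auto
      moreover have "j < n" using 2(1) that by blast
      ultimately show ?thesis using 1(1) by simp
    qed
    have "p = (\<Sum>j\<in>S1 \<inter> S2. mu j *\<^sub>R vs j)" unfolding mu(1) using f2 inS1
      by (intro sum.mono_neutral_cong_right) auto
    thus "p \<in> cn (S1 \<inter> S2)" using cone_comb[of "S1 \<inter> S2" mu] mu(2) by auto
  qed
qed

lemma sigma_char:
  assumes "S0 \<in> C" "x \<in> cn S0"
  obtains T0 mu where "T0 \<in> C" "sigma_of vs n om x = cn T0" "x = (\<Sum>i\<in>T0. mu i *\<^sub>R vs i)"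
    "\<forall>i\<in>T0. mu i > 0" "\<forall>T\<in>C. x \<in> cn T \<longrightarrow> T0 \<subseteq> T"
proof -
  define Fam where "Fam = {T \<in> C. x \<in> cn T}"
  have finC: "finite C"
  proof -
    have "C \<subseteq> Pow {..<n}" using cell_sub by auto
    thus ?thesis using finite_subset by blast
  qed
  have finF: "finite Fam" using finC by (simp add: Fam_def)
  have neF: "Fam \<noteq> {}" using assms by (auto simp: Fam_def)
  have gen: "\<Inter>F \<in> C \<and> x \<in> cn (\<Inter>F)" if "finite F" "F \<noteq> {}" "F \<subseteq> Fam" for F
    using that
  proof (induction F rule: finite_ne_induct)
    case (singleton T) thus ?case by (simp add: Fam_def)
  next
    case (insert T F)
    have TF: "T \<in> C" "x \<in> cn T" using insert.prems by (auto simp: Fam_def)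
    have IH: "\<Inter>F \<in> C" "x \<in> cn (\<Inter>F)" using insert by auto
    have "T \<inter> \<Inter>F \<in> C" using cell_Int TF IH by blast
    moreover have "x \<in> cn (T \<inter> \<Inter>F)" using cone_Int[OF TF(1) IH(1)] TF IH by blast
    ultimately show ?case by simp
  qed
  define T0 where "T0 = \<Inter>Fam"
  have T0: "T0 \<in> C" "x \<in> cn T0" using gen[OF finF neF] by (auto simp: T0_def)
  have T0min: "\<forall>T\<in>C. x \<in> cn T \<longrightarrow> T0 \<subseteq> T" by (auto simp: T0_def Fam_def)
  obtain mu where mu: "x = (\<Sum>i\<in>T0. mu i *\<^sub>R vs i)" "\<forall>i\<in>T0. mu i \<ge> 0"
    using T0(2) by (auto simp: cone_of_def)
  define T' where "T' = {i \<in> T0. mu i > 0}"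
  have T'C: "T' \<in> C" using cell_subset[OF T0(1)] by (auto simp: T'_def)
  have "x = (\<Sum>i\<in>T'. mu i *\<^sub>R vs i)" unfolding mu(1) using cell_fin[OF T0(1)] mu(2)
    by (intro sum.mono_neutral_cong_right) (auto simp: T'_def)
  hence "x \<in> cn T'" using cone_comb[of T' mu] mu(2) by (auto simp: T'_def)
  hence "T0 \<subseteq> T'" using T0min T'C by blast
  hence mupos: "\<forall>i\<in>T0. mu i > 0" by (auto simp: T'_def)
  have P1: "cn T0 \<in> fan vs n om" using T0(1) by (simp add: fan_def)
  have P3: "\<forall>\<tau> \<in> fan vs n om. x \<in> \<tau> \<longrightarrow> cn T0 \<subseteq> \<tau>"
  proof (intro ballI impI)
    fix \<tau> assume "\<tau> \<in> fan vs n om" "x \<in> \<tau>"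
    then obtain T where T: "T \<in> C" "\<tau> = cn T" by (auto simp: fan_def)
    hence "T0 \<subseteq> T" using T0min \<open>x \<in> \<tau>\<close> by blast
    thus "cn T0 \<subseteq> \<tau>" using cone_mono cell_fin T by blast
  qed
  have P: "cn T0 \<in> fan vs n om \<and> x \<in> cn T0 \<and> (\<forall>\<tau> \<in> fan vs n om. x \<in> \<tau> \<longrightarrow> cn T0 \<subseteq> \<tau>)"
    using P1 T0(2) P3 by blast
  have "sigma_of vs n om x = cn T0"
    unfolding sigma_of_def
  proof (rule the_equality)
    fix \<sigma> assume "\<sigma> \<in> fan vs n om \<and> x \<in> \<sigma> \<and> (\<forall>\<tau> \<in> fan vs n om. x \<in> \<tau> \<longrightarrow> \<sigma> \<subseteq> \<tau>)"
    thus "\<sigma> = cn T0" using P by blast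
  qed (rule P)
  thus ?thesis using that T0 mu mupos T0min by blast
qed

lemma ray_face:
  assumes "T \<in> C" "j \<in> T" shows "ray vs j face_of cn T"
proof -
  have fin: "finite T" using cell_fin assms(1) by blast
  have sub: "ray vs j \<subseteq> cn T" using cone_gen[OF assms(2) fin] cone_scale by (auto simp: ray_def)
  have cvx: "convex (ray vs j)"
    unfolding convex_def ray_def
  proof (intro ballI allI impI)
    fix x y :: "real^'d" and u v :: real
    assume "x \<in> {c *\<^sub>R vs j |c. 0 \<le> c}" "y \<in> {c *\<^sub>R vs j |c. 0 \<le> c}" "0 \<le> u" "0 \<le> v" "u + v = 1"
    then obtain c1 c2 where "x = c1 *\<^sub>R vs j" "y = c2 *\<^sub>R vs j" "c1 \<ge> 0" "c2 \<ge> 0" "u \<ge> 0" "v \<ge> 0" by auto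
    hence "u *\<^sub>R x + v *\<^sub>R y = (u * c1 + v * c2) *\<^sub>R vs j" "u * c1 + v * c2 \<ge> 0" by (auto simp: scaleR_add_left)
    thus "u *\<^sub>R x + v *\<^sub>R y \<in> {c *\<^sub>R vs j |c. 0 \<le> c}" by blast
  qed
  have seg: "a \<in> ray vs j \<and> b \<in> ray vs j"
    if ab: "a \<in> cn T" "b \<in> cn T" "z \<in> ray vs j" "z \<in> open_segment a b" for a b z
  proof -
    obtain al where al: "a = (\<Sum>i\<in>T. al i *\<^sub>R vs i)" "\<forall>i\<in>T. al i \<ge> 0" using ab(1) by (auto simp: cone_of_def)
    obtain be where be: "b = (\<Sum>i\<in>T. be i *\<^sub>R vs i)" "\<forall>i\<in>T. be i \<ge> 0" using ab(2) by (auto simp: cone_of_def)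
    obtain c where c: "z = c *\<^sub>R vs j" "c \<ge> 0" using ab(3) by (auto simp: ray_def)
    obtain u where u: "0 < u" "u < 1" "z = (1 - u) *\<^sub>R a + u *\<^sub>R b" using ab(4) by (auto simp: in_segment)
    have "(\<Sum>i\<in>T. ((1 - u) * al i + u * be i) *\<^sub>R vs i) = (1 - u) *\<^sub>R a + u *\<^sub>R b"
      unfolding al(1) be(1) by (simp add: scaleR_sum_right sum.distrib scaleR_add_left)
    also have "\<dots> = (\<Sum>i\<in>T. (if i = j then c else 0) *\<^sub>R vs i)"
      using u(3) c(1) sum_single[OF fin assms(2), of c] by simp
    finally have eq: "(\<Sum>i\<in>T. ((1 - u) * al i + u * be i) *\<^sub>R vs i) = (\<Sum>i\<in>T. (if i = j then c else 0) *\<^sub>R vs i)" .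
    have z: "al i = 0 \<and> be i = 0" if "i \<in> T" "i \<noteq> j" for i
    proof -
      have "(1 - u) * al i + u * be i = 0" using coeff_unique[OF assms(1) eq that(1)] that by simp
      moreover have "(1 - u) * al i \<ge> 0" "u * be i \<ge> 0" using al(2) be(2) u that by auto
      ultimately have "(1 - u) * al i = 0" "u * be i = 0" by linarith+
      thus ?thesis using u by auto
    qed
    have "a = (\<Sum>i\<in>T. (if i = j then al j else 0) *\<^sub>R vs i)" unfolding al(1)
      using z by (intro sum.cong) auto
    hence "a = al j *\<^sub>R vs j" using sum_single[OF fin assms(2)] by simp
    moreover have "b = (\<Sum>i\<in>T. (if i = j then be j else 0) *\<^sub>R vs i)" unfolding be(1)
      using z by (intro sum.cong) auto
    hence "b = be j *\<^sub>R vs j" using sum_single[OF fin assms(2)] by simp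
    ultimately show ?thesis using al(2) be(2) assms(2) by (auto simp: ray_def)
  qed
  show ?thesis unfolding face_of_def using sub cvx seg by blast
qed

end

context ctx begin

lemma hc_nz: "hc \<noteq> 0"
  using h_one n_pos by force

lemma cone_nonneg:
  assumes "\<forall>j\<in>S. \<alpha> \<bullet> vs j \<ge> 0" "q \<in> cn S" shows "\<alpha> \<bullet> q \<ge> 0"
proof -
  obtain c where c: "q = (\<Sum>j\<in>S. c j *\<^sub>R vs j)" "\<forall>j\<in>S. c j \<ge> 0" using assms(2) by (auto simp: cone_of_def)
  have "\<alpha> \<bullet> q = (\<Sum>j\<in>S. c j * (\<alpha> \<bullet> vs j))" by (simp add: c(1) inner_sum_right)
  also have "\<dots> \<ge> 0" using c(2) assms(1) by (intro sum_nonneg) auto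
  finally show ?thesis .
qed

lemma pair_sum2: "(\<Sum>j\<in>A. (g j, h j)) = (sum g A, sum h A)"
  by (simp add: prod_eq_iff fst_sum snd_sum)

lemma pair_sum: "(\<Sum>j\<in>A. mu j *\<^sub>R (vs j, om j)) = ((\<Sum>j\<in>A. mu j *\<^sub>R vs j), (\<Sum>j\<in>A. mu j * om j))"
  by (simp add: prod_eq_iff fst_sum snd_sum)

lemma cover:
  assumes p: "p \<in> interior (cn {..<n})"
  shows "\<exists>S\<in>C. p \<in> cn S"
proof -
  let ?K = "cn {..<n}"
  have pK: "p \<in> ?K" using p interior_subset by blast
  obtain lam where lam: "p = (\<Sum>j<n. lam j *\<^sub>R vs j)" "\<forall>j<n. lam j \<ge> 0"
    using pK by (auto simp: cone_of_def)
  define t0 where "t0 = (\<Sum>j<n. lam j)"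
  have hK: "hc \<bullet> q = (\<Sum>j<n. c j)" if "q = (\<Sum>j<n. c j *\<^sub>R vs j)" for q c
    using that h_one by (simp add: inner_sum_right)
  have hp: "hc \<bullet> p = t0" using hK[OF lam(1)] t0_def by simp
  obtain e where e: "e > 0" "ball p e \<subseteq> ?K" using p mem_interior by blast
  have hcK: "hc \<bullet> q \<ge> 0" if "q \<in> ?K" for q using cone_nonneg[OF _ that, of hc] h_one by simp
  have t0pos: "t0 > 0"
  proof -
    define q where "q = p - (e / 2 / norm hc) *\<^sub>R hc"
    have nh: "norm hc > 0" using hc_nz by simp
    have "dist p q = e / 2" using nh e(1) by (simp add: q_def dist_norm)
    hence "q \<in> ?K" using e by auto
    hence "hc \<bullet> q \<ge> 0" by (rule hcK)
    moreover have "hc \<bullet> q = t0 - (e / 2 / norm hc) * (norm hc)^2"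
      by (simp add: q_def inner_diff_right hp power2_norm_eq_inner)
    moreover have "(e / 2 / norm hc) * (norm hc)^2 = e / 2 * norm hc" using nh by (simp add: power2_eq_square)
    moreover have "e / 2 * norm hc > 0" using nh e by simp
    ultimately show ?thesis by linarith
  qed
  define y where "y = (1 / t0) *\<^sub>R p"
  define f where "f = (\<lambda>j. (vs j, om j))"
  define Q where "Q = convex hull (f ` {..<n})"
  have injf: "inj_on f {..<n}" using vs_inj by (auto simp: inj_on_def f_def)
  have inQ: "((\<Sum>j<n. mu j *\<^sub>R vs j), (\<Sum>j<n. mu j * om j)) \<in> Q"
    if "\<forall>j<n. mu j \<ge> 0" "(\<Sum>j<n. mu j) = 1" for mu
  proof -
    have "(\<Sum>j<n. mu j *\<^sub>R f j) \<in> Q" unfolding Q_def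
      by (rule convex_sum) (use that in \<open>auto intro: hull_inc\<close>)
    thus ?thesis by (simp add: f_def pair_sum2)
  qed
  have fromQ: "\<exists>mu. (\<forall>j<n. mu j \<ge> 0) \<and> (\<Sum>j<n. mu j) = 1 \<and> z = ((\<Sum>j<n. mu j *\<^sub>R vs j), (\<Sum>j<n. mu j * om j))"
    if "z \<in> Q" for z
  proof -
    have zQ: "z \<in> convex hull (f ` {..<n})" using that by (simp add: Q_def)
    obtain u where u: "\<forall>x\<in>f ` {..<n}. 0 \<le> u x" "sum u (f ` {..<n}) = 1" "(\<Sum>x\<in>f ` {..<n}. u x *\<^sub>R x) = z"
      using zQ unfolding convex_hull_finite[OF finite_imageI[OF finite_lessThan]] by blast
    have A: "(\<Sum>j<n. u (f j)) = 1" using u(2) sum.reindex[OF injf, of u] by simp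
    have "z = (\<Sum>j<n. u (f j) *\<^sub>R f j)" using u(3) sum.reindex[OF injf, of "\<lambda>x. u x *\<^sub>R x"] by simp
    hence B: "z = ((\<Sum>j<n. u (f j) *\<^sub>R vs j), (\<Sum>j<n. u (f j) * om j))" by (simp add: f_def pair_sum2)
    have C: "\<forall>j<n. u (f j) \<ge> 0" using u(1) by auto
    show ?thesis by (rule exI[where x="\<lambda>j. u (f j)"]) (use A B C in auto)
  qed
  define Z where "Z = snd ` (Q \<inter> ({y} \<times> UNIV))"
  have cZ: "compact Z"
  proof -
    have "compact Q" unfolding Q_def by (intro compact_convex_hull finite_imp_compact) auto
    hence "compact (Q \<inter> ({y} \<times> UNIV))" by (intro compact_Int_closed closed_Times) auto
    thus ?thesis unfolding Z_def by (intro compact_continuous_image continuous_intros)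
  qed
  have yQ: "(y, (\<Sum>j<n. (lam j / t0) * om j)) \<in> Q"
  proof -
    have "((\<Sum>j<n. (lam j / t0) *\<^sub>R vs j), (\<Sum>j<n. (lam j / t0) * om j)) \<in> Q"
      using t0pos lam(2) by (intro inQ) (auto simp: t0_def sum_divide_distrib[symmetric])
    moreover have "(\<Sum>j<n. (lam j / t0) *\<^sub>R vs j) = y"
      by (simp add: y_def lam(1) scaleR_sum_right divide_inverse_commute)
    ultimately show ?thesis by simp
  qed
  have neZ: "Z \<noteq> {}" using yQ by (auto simp: Z_def)
  obtain m where m: "m \<in> Z" "\<forall>s\<in>Z. m \<le> s" using compact_attains_inf[OF cZ neZ] by blast
  have ymQ: "(y, m) \<in> Q" using m(1) by (auto simp: Z_def)
  have mmin: "m \<le> s" if "(y, s) \<in> Q" for s using m(2) that by (force simp: Z_def)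
  obtain mu where mu: "\<forall>j<n. mu j \<ge> 0" "(\<Sum>j<n. mu j) = 1"
    "y = (\<Sum>j<n. mu j *\<^sub>R vs j)" "m = (\<Sum>j<n. mu j * om j)"
    using fromQ[OF ymQ] by auto
  define P where "P = {((\<Sum>j<n. l j *\<^sub>R vs j), (\<Sum>j<n. l j * om j) + t) | l t. (\<forall>j<n. l j \<ge> 0) \<and> t \<ge> (0::real)}"
  have Pmem: "((\<Sum>j<n. l j *\<^sub>R vs j), (\<Sum>j<n. l j * om j) + t) \<in> P" if "\<forall>j<n. l j \<ge> 0" "t \<ge> 0" for l t
    using that unfolding P_def by blast
  have Pscale: "k *\<^sub>R z \<in> P" if zP: "z \<in> P" and k0: "k \<ge> 0" for z k
  proof -
    obtain l t where lt: "z = ((\<Sum>j<n. l j *\<^sub>R vs j), (\<Sum>j<n. l j * om j) + t)" "\<forall>j<n. l j \<ge> 0" "t \<ge> 0"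
      using zP unfolding P_def by blast
    have "k *\<^sub>R z = ((\<Sum>j<n. (k * l j) *\<^sub>R vs j), (\<Sum>j<n. (k * l j) * om j) + k * t)"
      by (simp add: lt(1) scaleR_sum_right sum_distrib_left distrib_left mult.assoc)
    moreover have n1: "\<forall>j<n. k * l j \<ge> 0" using lt k0 by auto
    moreover have n2: "k * t \<ge> 0" using lt k0 by auto
    ultimately show ?thesis using Pmem[OF n1 n2] by simp
  qed
  have cvxP: "convex P"
    unfolding convex_def
  proof (intro ballI allI impI)
    fix z1 z2 and u v :: real assume a: "z1 \<in> P" "z2 \<in> P" "0 \<le> u" "0 \<le> v" "u + v = 1"
    obtain l1 t1 where 1: "z1 = ((\<Sum>j<n. l1 j *\<^sub>R vs j), (\<Sum>j<n. l1 j * om j) + t1)" "\<forall>j<n. l1 j \<ge> 0" "t1 \<ge> 0"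
      using a(1) unfolding P_def by blast
    obtain l2 t2 where 2: "z2 = ((\<Sum>j<n. l2 j *\<^sub>R vs j), (\<Sum>j<n. l2 j * om j) + t2)" "\<forall>j<n. l2 j \<ge> 0" "t2 \<ge> 0"
      using a(2) unfolding P_def by blast
    have e1: "u *\<^sub>R (\<Sum>j<n. l1 j *\<^sub>R vs j) + v *\<^sub>R (\<Sum>j<n. l2 j *\<^sub>R vs j) = (\<Sum>j<n. (u * l1 j + v * l2 j) *\<^sub>R vs j)"
      by (simp add: scaleR_sum_right scaleR_add_left sum.distrib)
    have e2: "u * ((\<Sum>j<n. l1 j * om j) + t1) + v * ((\<Sum>j<n. l2 j * om j) + t2) = (\<Sum>j<n. (u * l1 j + v * l2 j) * om j) + (u * t1 + v * t2)"
    proof -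
      have "(\<Sum>j<n. (u * l1 j + v * l2 j) * om j) = u * (\<Sum>j<n. l1 j * om j) + v * (\<Sum>j<n. l2 j * om j)"
        by (simp add: sum_distrib_left distrib_right sum.distrib mult.assoc)
      thus ?thesis by (simp add: distrib_left)
    qed
    have "u *\<^sub>R z1 + v *\<^sub>R z2 = ((\<Sum>j<n. (u * l1 j + v * l2 j) *\<^sub>R vs j), (\<Sum>j<n. (u * l1 j + v * l2 j) * om j) + (u * t1 + v * t2))"
      unfolding 1(1) 2(1) using e1 e2 by simp
    moreover have n1: "\<forall>j<n. u * l1 j + v * l2 j \<ge> 0" using 1(2) 2(2) a(3,4) by (auto intro!: add_nonneg_nonneg mult_nonneg_nonneg)
    moreover have n2: "u * t1 + v * t2 \<ge> 0" using 1(3) 2(3) a(3,4) by (auto intro!: add_nonneg_nonneg mult_nonneg_nonneg)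
    ultimately show "u *\<^sub>R z1 + v *\<^sub>R z2 \<in> P" using Pmem[OF n1 n2] by simp
  qed
  have tmu: "(\<Sum>j<n. (t0 * mu j) *\<^sub>R vs j) = p"
  proof -
    have "(\<Sum>j<n. (t0 * mu j) *\<^sub>R vs j) = t0 *\<^sub>R (\<Sum>j<n. mu j *\<^sub>R vs j)" by (simp add: scaleR_sum_right)
    also have "\<dots> = t0 *\<^sub>R y" using mu(3) by simp
    also have "\<dots> = p" using t0pos by (simp add: y_def)
    finally show ?thesis .
  qed
  define z0 where "z0 = (p, t0 * m)"
  have z0P: "z0 \<in> P"
  proof -
    have "((\<Sum>j<n. (t0 * mu j) *\<^sub>R vs j), (\<Sum>j<n. (t0 * mu j) * om j) + 0) \<in> P"
      using mu(1) t0pos by (intro Pmem) auto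
    moreover have "(\<Sum>j<n. (t0 * mu j) *\<^sub>R vs j) = p"
      by (rule tmu)
    moreover have "(\<Sum>j<n. (t0 * mu j) * om j) = t0 * m"
      by (simp add: mu(4) sum_distrib_left mult.assoc)
    ultimately show ?thesis by (simp add: z0_def)
  qed
  define L where "L = {(p, s) | s. s < t0 * m}"
  have cvxL: "convex L"
    unfolding convex_def
  proof (intro ballI allI impI)
    fix z1 z2 and u v :: real assume a: "z1 \<in> L" "z2 \<in> L" "0 \<le> u" "0 \<le> v" "u + v = 1"
    obtain s1 s2 where s: "z1 = (p, s1)" "z2 = (p, s2)" "s1 < t0 * m" "s2 < t0 * m" using a(1,2) by (auto simp: L_def)
    have "u *\<^sub>R z1 + v *\<^sub>R z2 = (p, u * s1 + v * s2)"
      using a(5) by (simp add: s scaleR_add_left[symmetric])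
    moreover have "u * s1 + v * s2 < t0 * m"
    proof (cases "u = 0")
      case True thus ?thesis using a s by simp
    next
      case False
      hence "u * s1 < u * (t0 * m)" using a s by simp
      moreover have "v * s2 \<le> v * (t0 * m)" using a s by (intro mult_left_mono) auto
      ultimately have "u * s1 + v * s2 < (u + v) * (t0 * m)" by (simp add: distrib_right)
      thus ?thesis using a by simp
    qed
    ultimately show "u *\<^sub>R z1 + v *\<^sub>R z2 \<in> L" by (simp add: L_def)
  qed
  have neL: "L \<noteq> {}" by (auto simp: L_def intro!: exI[of _ "t0 * m - 1"])
  have disj: "L \<inter> P = {}"
  proof (rule ccontr)
    assume "L \<inter> P \<noteq> {}"
    then obtain s where s: "s < t0 * m" "(p, s) \<in> P" by (auto simp: L_def)
    then obtain l t where lt: "p = (\<Sum>j<n. l j *\<^sub>R vs j)" "s = (\<Sum>j<n. l j * om j) + t" "\<forall>j<n. l j \<ge> 0" "t \<ge> 0"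
      unfolding P_def by blast
    have sl: "(\<Sum>j<n. l j) = t0" using hK[OF lt(1)] hp by simp
    have "((\<Sum>j<n. (l j / t0) *\<^sub>R vs j), (\<Sum>j<n. (l j / t0) * om j)) \<in> Q"
      using t0pos lt(3) sl by (intro inQ) (auto simp: sum_divide_distrib[symmetric])
    moreover have "(\<Sum>j<n. (l j / t0) *\<^sub>R vs j) = y"
      by (simp add: y_def lt(1) scaleR_sum_right divide_inverse_commute)
    ultimately have "m \<le> (\<Sum>j<n. (l j / t0) * om j)" using mmin by simp
    also have "\<dots> = (\<Sum>j<n. l j * om j) / t0" by (simp add: sum_divide_distrib)
    finally have "t0 * m \<le> (\<Sum>j<n. l j * om j)" using t0pos by (simp add: field_simps)
    thus False using s(1) lt(2,4) by linarith
  qed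
  have neP: "P \<noteq> {}" using z0P by auto
  obtain \<xi> b where xb: "\<xi> \<noteq> 0" "\<forall>x\<in>L. \<xi> \<bullet> x \<le> b" "\<forall>x\<in>P. \<xi> \<bullet> x \<ge> b"
    using separating_hyperplane_sets[OF cvxL cvxP neL neP disj] by blast
  define \<alpha> where "\<alpha> = fst \<xi>"
  define \<sigma> where "\<sigma> = snd \<xi>"
  have xi: "\<xi> \<bullet> (x1, x2) = \<alpha> \<bullet> x1 + \<sigma> * x2" for x1 x2
    by (metis \<alpha>_def \<sigma>_def inner_Pair inner_real_def prod.collapse)
  have zeroP: "(0, 0) \<in> P" using Pmem[of "\<lambda>_. 0" 0] by simp
  have b0: "b \<le> 0" using xb(3) zeroP xi[of 0 0] by force
  have Pnn: "\<xi> \<bullet> z \<ge> 0" if "z \<in> P" for z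
  proof (rule ccontr)
    assume neg: "\<not> \<xi> \<bullet> z \<ge> 0"
    define k where "k = (1 - b) / (- (\<xi> \<bullet> z))"
    have "- (\<xi> \<bullet> z) > 0" using neg by simp
    hence kpos: "k \<ge> 0" unfolding k_def using b0 by (intro divide_nonneg_pos) auto
    have "\<xi> \<bullet> (k *\<^sub>R z) = b - 1" using neg by (simp add: k_def)
    moreover have "\<xi> \<bullet> (k *\<^sub>R z) \<ge> b" using xb(3) Pscale[OF that kpos] by blast
    ultimately show False by simp
  qed
  have sig0: "\<sigma> \<ge> 0"
  proof -
    have "((\<Sum>j<n. 0 *\<^sub>R vs j), (\<Sum>j<n. 0 * om j) + 1) \<in> P" by (rule Pmem) auto
    hence "(0, 1) \<in> P" by simp
    thus ?thesis using Pnn xi[of 0 1] by force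
  qed
  have avj: "\<alpha> \<bullet> vs j + \<sigma> * om j \<ge> 0" if "j < n" for j
  proof -
    have "((\<Sum>i<n. (if i = j then 1 else 0) *\<^sub>R vs i), (\<Sum>i<n. (if i = j then 1 else 0) * om i) + 0) \<in> P"
      by (rule Pmem) auto
    moreover have "(\<Sum>i<n. (if i = j then 1 else 0) *\<^sub>R vs i) = vs j"
      using sum_single[of "{..<n}" j 1] that by simp
    moreover have "(\<Sum>i<n. (if i = j then 1 else 0) * om i) = om j"
    proof -
      have "(\<Sum>i<n. (if i = j then 1 else 0) * om i) = (\<Sum>i<n. if i = j then om i else 0)"
        by (intro sum.cong) auto
      also have "\<dots> = om j" using that by (simp add: sum.delta)
      finally show ?thesis .
    qed
    ultimately have "(vs j, om j) \<in> P" by simp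
    thus ?thesis using Pnn xi by force
  qed
  have lo: "\<alpha> \<bullet> p + \<sigma> * (t0 * m) \<ge> 0" using Pnn[OF z0P] xi by (simp add: z0_def)
  have up: "\<alpha> \<bullet> p + \<sigma> * (t0 * m) \<le> 0"
  proof (rule ccontr)
    assume "\<not> ?thesis"
    hence cpos: "\<alpha> \<bullet> p + \<sigma> * (t0 * m) > 0" by simp
    show False
    proof (cases "\<sigma> = 0")
      case True
      have "(p, t0 * m - 1) \<in> L" by (auto simp: L_def)
      hence "\<alpha> \<bullet> p \<le> b" using xb(2) xi True by force
      thus False using cpos True b0 by simp
    next
      case False
      hence sp: "\<sigma> > 0" using sig0 by simp
      define c where "c = \<alpha> \<bullet> p + \<sigma> * (t0 * m)"
      have "(p, t0 * m - c / (2 * \<sigma>)) \<in> L" using cpos sp by (auto simp: L_def c_def)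
      hence "\<alpha> \<bullet> p + \<sigma> * (t0 * m - c / (2 * \<sigma>)) \<le> b" using xb(2) xi by force
      moreover have "\<alpha> \<bullet> p + \<sigma> * (t0 * m - c / (2 * \<sigma>)) = c / 2"
        using sp by (simp add: c_def field_simps)
      ultimately show False using cpos b0 by (simp add: c_def)
    qed
  qed
  have eq0: "\<alpha> \<bullet> p + \<sigma> * (t0 * m) = 0" using lo up by simp
  have sigpos: "\<sigma> > 0"
  proof (rule ccontr)
    assume "\<not> \<sigma> > 0"
    hence s0: "\<sigma> = 0" using sig0 by simp
    hence an: "\<alpha> \<noteq> 0" using xb(1) by (metis \<alpha>_def \<sigma>_def prod.collapse zero_prod_def)
    have aK: "\<alpha> \<bullet> q \<ge> 0" if "q \<in> ?K" for q
      using cone_nonneg[OF _ that, of \<alpha>] avj s0 by simp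
    have ap: "\<alpha> \<bullet> p = 0" using eq0 s0 by simp
    define q where "q = p - (e / 2 / norm \<alpha>) *\<^sub>R \<alpha>"
    have na: "norm \<alpha> > 0" using an by simp
    have "dist p q = e / 2" using na e(1) by (simp add: q_def dist_norm)
    hence "q \<in> ?K" using e by auto
    hence "\<alpha> \<bullet> q \<ge> 0" by (rule aK)
    moreover have "\<alpha> \<bullet> q = - ((e / 2 / norm \<alpha>) * (norm \<alpha>)^2)"
      by (simp add: q_def inner_diff_right ap power2_norm_eq_inner)
    moreover have "(e / 2 / norm \<alpha>) * (norm \<alpha>)^2 > 0" using na e by simp
    ultimately show False by linarith
  qed
  define a where "a = (- 1 / \<sigma>) *\<^sub>R \<alpha>"
  have av: "a \<bullet> vs j = - (\<alpha> \<bullet> vs j) / \<sigma>" for j by (simp add: a_def)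
  have ale: "\<forall>j<n. a \<bullet> vs j \<le> om j"
  proof (intro allI impI)
    fix j assume "j < n"
    hence "\<alpha> \<bullet> vs j + \<sigma> * om j \<ge> 0" by (rule avj)
    thus "a \<bullet> vs j \<le> om j" using sigpos by (simp add: av field_simps)
  qed
  define S where "S = {j \<in> {..<n}. a \<bullet> vs j = om j}"
  have SC: "S \<in> C" unfolding S_def cells_def using ale by blast
  have sumz: "(\<Sum>j<n. (t0 * mu j) * (\<alpha> \<bullet> vs j + \<sigma> * om j)) = 0"
  proof -
    have "(\<Sum>j<n. (t0 * mu j) * (\<alpha> \<bullet> vs j + \<sigma> * om j))
        = \<alpha> \<bullet> (\<Sum>j<n. (t0 * mu j) *\<^sub>R vs j) + \<sigma> * (t0 * (\<Sum>j<n. mu j * om j))"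
      by (simp add: inner_sum_right distrib_left sum.distrib sum_distrib_left mult_ac)
    also have "(\<Sum>j<n. (t0 * mu j) *\<^sub>R vs j) = p"
      by (rule tmu)
    finally show ?thesis using eq0 mu(4) by simp
  qed
  have tnn: "\<forall>j\<in>{..<n}. (t0 * mu j) * (\<alpha> \<bullet> vs j + \<sigma> * om j) \<ge> 0"
    using t0pos mu(1) avj by auto
  have tz: "\<forall>j\<in>{..<n}. (t0 * mu j) * (\<alpha> \<bullet> vs j + \<sigma> * om j) = 0"
    using sum_nonneg_eq_0_iff[of "{..<n}" "\<lambda>j. (t0 * mu j) * (\<alpha> \<bullet> vs j + \<sigma> * om j)"] sumz tnn by simp
  have inS: "j \<in> S" if "j < n" "mu j \<noteq> 0" for j
  proof -
    have "\<alpha> \<bullet> vs j + \<sigma> * om j = 0" using tz that t0pos by auto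
    hence "a \<bullet> vs j = om j" using sigpos by (simp add: av field_simps)
    thus ?thesis using that by (simp add: S_def)
  qed
  have "p = (\<Sum>j<n. (t0 * mu j) *\<^sub>R vs j)"
    by (rule tmu[symmetric])
  also have "\<dots> = (\<Sum>j\<in>S. (t0 * mu j) *\<^sub>R vs j)"
    using inS by (intro sum.mono_neutral_cong_right) (auto simp: S_def)
  finally have "p \<in> cn S" using cone_comb[of S "\<lambda>j. t0 * mu j"] mu(1) t0pos by (auto simp: S_def)
  thus ?thesis using SC by blast
qed

end


lemma lat_zero: "0 \<in> lattice" by (simp add: lattice_def)
lemma lat_add: "x \<in> lattice \<Longrightarrow> y \<in> lattice \<Longrightarrow> x + y \<in> lattice"
  by (simp add: lattice_def Ints_add)
lemma lat_neg: "x \<in> lattice \<Longrightarrow> - x \<in> lattice"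
  by (simp add: lattice_def Ints_minus)
lemma lat_diff: "x \<in> lattice \<Longrightarrow> y \<in> lattice \<Longrightarrow> x - y \<in> lattice"
  by (simp add: lattice_def Ints_diff)
lemma lat_scale: "x \<in> lattice \<Longrightarrow> of_int k *\<^sub>R x \<in> lattice"
  by (simp add: lattice_def Ints_mult)
lemma lat_sum: "finite A \<Longrightarrow> (\<forall>a\<in>A. f a \<in> lattice) \<Longrightarrow> sum f A \<in> lattice"
  by (induction A rule: finite_induct) (auto intro: lat_zero lat_add)

lemma lat_fin: "finite {x \<in> (lattice :: (real^'n) set). norm x \<le> B}"
proof -
  define c where "c = \<lceil>B\<rceil>"
  have "{x \<in> (lattice :: (real^'n) set). norm x \<le> B} \<subseteq> (\<lambda>f. \<chi> i. of_int (f i)) ` (Pi\<^sub>E UNIV (\<lambda>_. {-c..c}))"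
  proof
    fix x :: "real^'n" assume x: "x \<in> {x \<in> lattice. norm x \<le> B}"
    define f where "f = (\<lambda>i. \<lfloor>x $ i\<rfloor>)"
    have xi: "of_int (f i) = x $ i" for i
    proof -
      have "x $ i \<in> \<int>" using x by (simp add: lattice_def)
      then obtain k where "x $ i = of_int k" by (auto elim: Ints_cases)
      thus ?thesis by (simp add: f_def)
    qed
    have fi: "f i \<in> {-c..c}" for i
    proof -
      have "\<bar>x $ i\<bar> \<le> B" using component_le_norm_cart[of x i] x by simp
      hence h: "-B \<le> x $ i" "x $ i \<le> B" by auto
      have "\<lfloor>x $ i\<rfloor> \<le> \<lceil>B\<rceil>" using floor_mono[OF h(2)] floor_le_ceiling[of B] by linarith
      moreover have "- \<lceil>B\<rceil> \<le> \<lfloor>x $ i\<rfloor>" using floor_mono[OF h(1)] floor_minus[of B] by linarith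
      ultimately show "f i \<in> {-c..c}" unfolding f_def c_def by simp
    qed
    hence "f \<in> Pi\<^sub>E UNIV (\<lambda>_. {-c..c})" by (simp add: PiE_UNIV_domain)
    moreover have "x = (\<chi> i. of_int (f i))" using xi by (simp add: vec_eq_iff)
    ultimately show "x \<in> (\<lambda>f. \<chi> i. of_int (f i)) ` (Pi\<^sub>E UNIV (\<lambda>_. {-c..c}))" by blast
  qed
  moreover have "finite (Pi\<^sub>E (UNIV::'n set) (\<lambda>_. {-c..c}))" by (intro finite_PiE) auto
  ultimately show ?thesis using finite_subset by blast
qed

context ctx begin

lemma vs_lat: "j < n \<Longrightarrow> vs j \<in> lattice" using vs_lattice by auto

lemma lat_comb: "A \<subseteq> {..<n} \<Longrightarrow> (\<Sum>j\<in>A. of_int (k j) *\<^sub>R vs j) \<in> lattice"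
  by (intro lat_sum) (auto intro: finite_subset lat_scale vs_lat)

lemma pigeon:
  assumes S: "S \<in> C" and zl: "z \<in> lattice" and zS: "z \<in> cn S"
  shows "\<exists>D::nat. D > 0 \<and> (\<exists>e::nat \<Rightarrow> nat. of_nat D *\<^sub>R z = (\<Sum>j\<in>S. of_nat (e j) *\<^sub>R vs j))"
proof -
  obtain c where c: "z = (\<Sum>j\<in>S. c j *\<^sub>R vs j)" "\<forall>j\<in>S. c j \<ge> 0" using zS by (auto simp: cone_of_def)
  have fin: "finite S" using cell_fin S by blast
  have Ssub: "S \<subseteq> {..<n}" using cell_sub S by blast
  define P where "P = (\<lambda>m::nat. (\<Sum>j\<in>S. frac (real m * c j) *\<^sub>R vs j))"
  define B where "B = (\<Sum>j\<in>S. norm (vs j))"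
  have Pl: "P m \<in> lattice" for m
  proof -
    have "of_int (int m) *\<^sub>R z = (\<Sum>j\<in>S. (real m * c j) *\<^sub>R vs j)"
      by (simp add: c(1) scaleR_sum_right)
    also have "\<dots> = P m + (\<Sum>j\<in>S. of_int \<lfloor>real m * c j\<rfloor> *\<^sub>R vs j)"
      unfolding P_def sum.distrib[symmetric] scaleR_add_left[symmetric]
      by (intro sum.cong) (auto simp: frac_def)
    finally have "P m = of_int (int m) *\<^sub>R z - (\<Sum>j\<in>S. of_int \<lfloor>real m * c j\<rfloor> *\<^sub>R vs j)" by simp
    thus ?thesis using lat_diff lat_scale[OF zl] lat_comb[OF Ssub] by metis
  qed
  have Pn: "norm (P m) \<le> B" for m
  proof -
    have "norm (P m) \<le> (\<Sum>j\<in>S. norm (frac (real m * c j) *\<^sub>R vs j))" unfolding P_def by (rule norm_sum)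
    also have "\<dots> \<le> B" unfolding B_def
    proof (rule sum_mono)
      fix j
      have "\<bar>frac (real m * c j)\<bar> \<le> 1" using frac_lt_1[of "real m * c j"] by simp
      thus "norm (frac (real m * c j) *\<^sub>R vs j) \<le> norm (vs j)"
        by (simp add: mult_left_le_one_le)
    qed
    finally show ?thesis .
  qed
  have "range P \<subseteq> {x \<in> lattice. norm x \<le> B}" using Pl Pn by auto
  hence "finite (range P)" using lat_fin finite_subset by blast
  hence "\<not> inj P" using finite_imageD infinite_UNIV_nat by blast
  then obtain m1 m2 where mm: "m1 \<noteq> m2" "P m1 = P m2" by (auto simp: inj_def)
  obtain a b where ab: "a < b" "P a = P b"
  proof (cases "m1 < m2")
    case True thus ?thesis using that mm by blast
  next
    case False hence "m2 < m1" using mm by simp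
    thus ?thesis using that mm by metis
  qed
  have fe: "frac (real a * c j) = frac (real b * c j)" if "j \<in> S" for j
    using coeff_unique[OF S _ that, of "\<lambda>j. frac (real a * c j)" "\<lambda>j. frac (real b * c j)"] ab(2)
    by (simp add: P_def)
  define D where "D = b - a"
  have Dpos: "D > 0" using ab by (simp add: D_def)
  have rD: "real D = real b - real a" using ab by (simp add: D_def)
  define e where "e = (\<lambda>j. nat (\<lfloor>real b * c j\<rfloor> - \<lfloor>real a * c j\<rfloor>))"
  have ej: "real (e j) = real D * c j" if "j \<in> S" for j
  proof -
    have eq: "real D * c j = of_int (\<lfloor>real b * c j\<rfloor> - \<lfloor>real a * c j\<rfloor>)"
      using fe[OF that] unfolding rD frac_def by (simp add: algebra_simps)
    have "real D * c j \<ge> 0" using c(2) that by simp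
    hence "\<lfloor>real b * c j\<rfloor> - \<lfloor>real a * c j\<rfloor> \<ge> 0" using eq by linarith
    thus ?thesis using eq by (simp add: e_def)
  qed
  have "of_nat D *\<^sub>R z = (\<Sum>j\<in>S. of_nat (e j) *\<^sub>R vs j)"
    unfolding c(1) scaleR_sum_right using ej by (intro sum.cong) auto
  thus ?thesis using Dpos by blast
qed

lemma represent:
  assumes tau: "\<tau> \<in> C" and u: "(\<Sum>j\<in>\<tau>. vs j) \<in> interior (cn {..<n})" and y: "y \<in> lattice"
  shows "\<exists>r::nat\<Rightarrow>int. (\<Sum>j<n. of_int (r j) *\<^sub>R vs j) = y \<and> (\<forall>j<n. j \<notin> \<tau> \<longrightarrow> r j \<ge> 0)"
proof -
  define G where "G = {y. \<exists>r::nat\<Rightarrow>int. (\<Sum>j<n. of_int (r j) *\<^sub>R vs j) = y \<and> (\<forall>j<n. j \<notin> \<tau> \<longrightarrow> r j \<ge> 0)}"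
  have G0: "0 \<in> G" unfolding G_def by (rule CollectI, rule exI[of _ "\<lambda>_. 0"]) simp
  have Gadd: "x + w \<in> G" if xG: "x \<in> G" and wG: "w \<in> G" for x w
  proof -
    obtain r1 where r1: "(\<Sum>j<n. of_int (r1 j) *\<^sub>R vs j) = x" "\<forall>j<n. j \<notin> \<tau> \<longrightarrow> r1 j \<ge> 0"
      using xG by (auto simp: G_def)
    obtain r2 where r2: "(\<Sum>j<n. of_int (r2 j) *\<^sub>R vs j) = w" "\<forall>j<n. j \<notin> \<tau> \<longrightarrow> r2 j \<ge> 0"
      using wG by (auto simp: G_def)
    have "(\<Sum>j<n. of_int (r1 j + r2 j) *\<^sub>R vs j) = x + w"
      using r1(1) r2(1) by (simp add: scaleR_add_left sum.distrib)
    moreover have "\<forall>j<n. j \<notin> \<tau> \<longrightarrow> r1 j + r2 j \<ge> 0" using r1 r2 by auto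
    ultimately show ?thesis unfolding G_def by (intro CollectI exI[of _ "\<lambda>j. r1 j + r2 j"]) simp
  qed
  have Gsum: "finite A \<Longrightarrow> (\<forall>a\<in>A. f a \<in> G) \<Longrightarrow> sum f A \<in> G" for A and f :: "'x \<Rightarrow> real^'d"
    by (induction A rule: finite_induct) (auto intro: G0 Gadd)
  have Gnat: "of_nat k *\<^sub>R x \<in> G" if "x \<in> G" for k x
  proof (induction k)
    case 0 thus ?case using G0 by simp
  next
    case (Suc k)
    have "of_nat (Suc k) *\<^sub>R x = x + of_nat k *\<^sub>R x" by (simp add: scaleR_add_left)
    thus ?case using Gadd[OF that Suc] by simp
  qed
  have Gv: "vs k \<in> G" if "k < n" for k
  proof -
    have "(\<Sum>j<n. of_int (if j = k then 1 else 0) *\<^sub>R vs j) = (\<Sum>j<n. (if j = k then 1 else 0) *\<^sub>R vs j)"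
      by (intro sum.cong) auto
    also have "\<dots> = vs k" using sum_single[of "{..<n}" k 1] that by simp
    finally show ?thesis unfolding G_def by (intro CollectI exI[of _ "\<lambda>j. if j = k then 1 else 0"]) simp
  qed
  have Gm: "- vs k \<in> G" if "k \<in> \<tau>" for k
  proof -
    have kn: "k < n" using cell_sub tau that by blast
    have "(\<Sum>j<n. of_int (if j = k then -1 else 0) *\<^sub>R vs j) = (\<Sum>j<n. (if j = k then -1 else 0) *\<^sub>R vs j)"
      by (intro sum.cong) auto
    also have "\<dots> = - vs k" using sum_single[of "{..<n}" k "-1"] kn by simp
    finally have "(\<Sum>j<n. of_int (if j = k then -1 else 0) *\<^sub>R vs j) = - vs k" .
    moreover have "\<forall>j<n. j \<notin> \<tau> \<longrightarrow> (if j = k then -1 else 0::int) \<ge> 0" using that by auto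
    ultimately show ?thesis unfolding G_def by (intro CollectI exI[of _ "\<lambda>j. if j = k then -1 else 0"]) simp
  qed
  have ftau: "finite \<tau>" using cell_fin tau by blast
  have tsub: "\<tau> \<subseteq> {..<n}" using cell_sub tau by blast
  define U where "U = (\<Sum>j\<in>\<tau>. vs j)"
  have Gneg: "- vs k \<in> G" if kn: "k < n" for k
  proof -
    have "U \<in> interior (cn {..<n})" using u by (simp add: U_def)
    then obtain \<epsilon> where eps: "\<epsilon> > 0" "ball U \<epsilon> \<subseteq> cn {..<n}" unfolding mem_interior by blast
    define M :: nat where "M = nat \<lceil>2 * norm (vs k) / \<epsilon>\<rceil> + 1"
    have Mpos: "real M > 0" by (simp add: M_def)
    have Mbig: "real M > 2 * norm (vs k) / \<epsilon>" unfolding M_def by linarith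
    hence Mb: "norm (vs k) / real M < \<epsilon> / 2" using Mpos eps(1) by (simp add: field_simps)
    define z' where "z' = U - (1 / real M) *\<^sub>R vs k"
    have "ball z' (\<epsilon> / 2) \<subseteq> ball U \<epsilon>"
    proof
      fix w assume "w \<in> ball z' (\<epsilon> / 2)"
      hence "dist z' w < \<epsilon> / 2" by simp
      moreover have "dist U z' = norm (vs k) / real M" using Mpos by (simp add: z'_def dist_norm)
      ultimately have "dist U w < \<epsilon>" using dist_triangle[of U w z'] Mb by linarith
      thus "w \<in> ball U \<epsilon>" by simp
    qed
    hence "ball z' (\<epsilon> / 2) \<subseteq> cn {..<n}" using eps(2) by blast
    hence "z' \<in> interior (cn {..<n})" unfolding mem_interior using eps(1) by (intro exI[of _ "\<epsilon> / 2"]) simp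
    then obtain S' where S': "S' \<in> C" "z' \<in> cn S'" using cover by blast
    define z where "z = real M *\<^sub>R U - vs k"
    have zz: "z = real M *\<^sub>R z'" using Mpos by (simp add: z_def z'_def scaleR_diff_right)
    have zS: "z \<in> cn S'" using cone_scale[OF _ S'(2), of "real M"] zz by simp
    have "real M *\<^sub>R U = (\<Sum>j\<in>\<tau>. of_int (int M) *\<^sub>R vs j)" by (simp add: U_def scaleR_sum_right)
    hence "real M *\<^sub>R U \<in> lattice" using lat_comb[OF tsub, of "\<lambda>_. int M"] by simp
    hence zl: "z \<in> lattice" unfolding z_def using lat_diff vs_lat kn by blast
    obtain D e where De: "D > 0" "of_nat D *\<^sub>R z = (\<Sum>j\<in>S'. of_nat (e j) *\<^sub>R vs j)"
      using pigeon[OF S'(1) zl zS] by blast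
    have fS': "finite S'" "S' \<subseteq> {..<n}" using cell_fin cell_sub S'(1) by auto
    have A1: "(\<Sum>j\<in>S'. of_nat (e j) *\<^sub>R vs j) \<in> G"
    proof (intro Gsum fS'(1) ballI)
      fix j assume "j \<in> S'" hence "j < n" using fS'(2) by blast
      show "of_nat (e j) *\<^sub>R vs j \<in> G" by (rule Gnat[OF Gv[OF \<open>j < n\<close>]])
    qed
    have A2: "(\<Sum>j\<in>\<tau>. of_nat (D * M) *\<^sub>R (- vs j)) \<in> G"
    proof (intro Gsum ftau ballI)
      fix j assume "j \<in> \<tau>"
      show "of_nat (D * M) *\<^sub>R (- vs j) \<in> G" by (rule Gnat[OF Gm[OF \<open>j \<in> \<tau>\<close>]])
    qed
    have A3: "of_nat (D - 1) *\<^sub>R vs k \<in> G" using Gnat[OF Gv[OF kn]] by blast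
    have B2: "(\<Sum>j\<in>\<tau>. of_nat (D * M) *\<^sub>R (- vs j)) = - ((real D * real M) *\<^sub>R U)"
      by (simp add: U_def scaleR_sum_right sum_negf)
    have B1: "(\<Sum>j\<in>S'. of_nat (e j) *\<^sub>R vs j) = (real D * real M) *\<^sub>R U - real D *\<^sub>R vs k"
      unfolding De(2)[symmetric] z_def by (simp add: scaleR_diff_right)
    have B3: "of_nat (D - 1) *\<^sub>R vs k = real D *\<^sub>R vs k - vs k"
      using De(1) by (simp add: of_nat_diff scaleR_diff_left)
    have "(\<Sum>j\<in>S'. of_nat (e j) *\<^sub>R vs j) + (\<Sum>j\<in>\<tau>. of_nat (D * M) *\<^sub>R (- vs j)) + of_nat (D - 1) *\<^sub>R vs k
        = - vs k"
      unfolding B1 B2 B3 by simp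
    thus ?thesis using Gadd[OF Gadd[OF A1 A2] A3] by simp
  qed
  obtain a :: "nat \<Rightarrow> int" where a: "y = (\<Sum>j<n. of_int (a j) *\<^sub>R vs j)" using generates y by blast
  have "of_int (a j) *\<^sub>R vs j \<in> G" if "j < n" for j
  proof (cases "a j \<ge> 0")
    case True
    hence eq: "of_int (a j) *\<^sub>R vs j = of_nat (nat (a j)) *\<^sub>R vs j" by simp
    show ?thesis unfolding eq by (rule Gnat[OF Gv[OF that]])
  next
    case False
    hence eq: "of_int (a j) *\<^sub>R vs j = of_nat (nat (- a j)) *\<^sub>R (- vs j)" by simp
    show ?thesis unfolding eq by (rule Gnat[OF Gneg[OF that]])
  qed
  hence "y \<in> G" unfolding a by (intro Gsum) auto
  thus ?thesis by (simp add: G_def)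
qed

end

context ctx begin

abbreviation "km \<equiv> kmult vs n om"
abbreviation "FAN \<equiv> fan vs n om"

definition Good :: "(real^'d) set \<Rightarrow> (real^'d \<Rightarrow> complex) \<Rightarrow> bool" where
  "Good X f \<longleftrightarrow> finite {w. f w \<noteq> 0} \<and> {w. f w \<noteq> 0} \<subseteq> X"

lemma km_supp:
  assumes "km f g w \<noteq> 0"
  shows "\<exists>a b. f a \<noteq> 0 \<and> g b \<noteq> 0 \<and> a + b = w \<and> compat vs n om a b"
proof (rule ccontr)
  assume "\<not> ?thesis"
  hence E: "{(a, b). f a \<noteq> 0 \<and> g b \<noteq> 0 \<and> a + b = w \<and> compat vs n om a b} = {}" by auto
  have "km f g w = 0" unfolding kmult_def E by simp
  thus False using assms by simp
qed

lemma km_mono: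
  "km (\<lambda>u. c * mono a u) (mono b) = (\<lambda>u. if compat vs n om a b then c * mono (a + b) u else 0)"
proof
  fix w
  show "km (\<lambda>u. c * mono a u) (mono b) w = (if compat vs n om a b then c * mono (a + b) w else 0)"
  proof (cases "c = 0")
    case True thus ?thesis by (simp add: kmult_def)
  next
    case False
    have "{(a', b'). c * mono a a' \<noteq> 0 \<and> mono b b' \<noteq> 0 \<and> a' + b' = w \<and> compat vs n om a' b'}
        = (if a + b = w \<and> compat vs n om a b then {(a, b)} else {})"
      using False by (auto simp: mono_def)
    thus ?thesis using False by (auto simp: kmult_def mono_def)
  qed
qed

lemma km_mono1: "km (mono a) (mono b) = (if compat vs n om a b then mono (a + b) else (\<lambda>_. 0))"
proof -
  have "mono a = (\<lambda>u. 1 * mono a u)" by simp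
  hence "km (mono a) (mono b) = (\<lambda>u. if compat vs n om a b then 1 * mono (a + b) u else 0)"
    using km_mono[of 1 a b] by simp
  thus ?thesis by auto
qed

lemma compat_cone: "S \<in> C \<Longrightarrow> a \<in> cn S \<Longrightarrow> b \<in> cn S \<Longrightarrow> compat vs n om a b"
  unfolding compat_def fan_def by blast

lemma fan_cone: "\<sigma> \<in> FAN \<Longrightarrow> \<exists>S\<in>C. \<sigma> = cn S"
  unfolding fan_def by blast

lemma cone_sum_mem: "finite A \<Longrightarrow> (\<forall>a\<in>A. f a \<in> cn S) \<Longrightarrow> sum f A \<in> cn S"
  by (induction A rule: finite_induct) (auto intro: cone_zero cone_add)

lemma sumlist_cone: "S \<in> C \<Longrightarrow> set js \<subseteq> S \<Longrightarrow> sum_list (map vs js) \<in> cn S"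
  by (induction js) (auto intro: cone_zero cone_add cone_gen cell_fin)

lemma kprod_mono:
  assumes "S \<in> C" "set js \<subseteq> S"
  shows "kprod_list vs n om (map (\<lambda>j. mono (vs j)) js) = mono (sum_list (map vs js))"
  using assms(2)
proof (induction js)
  case Nil thus ?case by (simp add: kprod_list_def)
next
  case (Cons j js)
  have IH: "kprod_list vs n om (map (\<lambda>j. mono (vs j)) js) = mono (sum_list (map vs js))" using Cons by simp
  have c: "compat vs n om (vs j) (sum_list (map vs js))"
    using compat_cone[OF assms(1) cone_gen[of j S] sumlist_cone[OF assms(1)]] Cons.prems cell_fin[OF assms(1)] by simp
  have "kprod_list vs n om (map (\<lambda>j. mono (vs j)) (j # js)) = km (mono (vs j)) (kprod_list vs n om (map (\<lambda>j. mono (vs j)) js))"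
    by (simp add: kprod_list_def)
  also have "\<dots> = mono (vs j + sum_list (map vs js))" using IH c km_mono1 by simp
  finally show ?case by simp
qed

lemma km_supp_mono: "{w. km (mono a) g w \<noteq> 0} \<subseteq> (\<lambda>b. a + b) ` {w. g w \<noteq> 0}"
proof
  fix w assume "w \<in> {w. km (mono a) g w \<noteq> 0}"
  hence "km (mono a) g w \<noteq> 0" by simp
  then obtain a' b where "mono a a' \<noteq> 0" "g b \<noteq> 0" "a' + b = w" using km_supp[of "mono a" g w] by blast
  thus "w \<in> (\<lambda>b. a + b) ` {w. g w \<noteq> 0}" by (auto simp: mono_def split: if_splits)
qed

lemma kprod_supp: "{w. kprod_list vs n om (map (\<lambda>j. mono (vs j)) js) w \<noteq> 0} \<subseteq> {sum_list (map vs js)}"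
proof (induction js)
  case Nil thus ?case by (auto simp: kprod_list_def mono_def)
next
  case (Cons j js)
  have "kprod_list vs n om (map (\<lambda>j. mono (vs j)) (j # js)) = km (mono (vs j)) (kprod_list vs n om (map (\<lambda>j. mono (vs j)) js))"
    by (simp add: kprod_list_def)
  thus ?case using km_supp_mono[of "vs j" "kprod_list vs n om (map (\<lambda>j. mono (vs j)) js)"] Cons by auto
qed

definition UF where "UF = \<Union> FAN"

lemma UF_K: "UF \<subseteq> cn {..<n}"
  unfolding UF_def fan_def using cell_cone_K K_eq by auto

lemma km_good:
  assumes "Good lattice f" "Good lattice g" shows "Good (UF \<inter> lattice) (km f g)"
proof -
  let ?A = "{w. f w \<noteq> 0}" and ?B = "{w. g w \<noteq> 0}"
  have sub: "{w. km f g w \<noteq> 0} \<subseteq> (\<lambda>(a, b). a + b) ` (?A \<times> ?B)"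
  proof
    fix w assume "w \<in> {w. km f g w \<noteq> 0}"
    hence "km f g w \<noteq> 0" by simp
    then obtain a b where "f a \<noteq> 0" "g b \<noteq> 0" "a + b = w" using km_supp[of f g w] by blast
    thus "w \<in> (\<lambda>(a, b). a + b) ` (?A \<times> ?B)" by force
  qed
  have fin: "finite {w. km f g w \<noteq> 0}"
    using assms by (intro finite_subset[OF sub] finite_imageI finite_cartesian_product) (auto simp: Good_def)
  have "w \<in> UF \<inter> lattice" if nz: "km f g w \<noteq> 0" for w
  proof -
    obtain a b where ab: "f a \<noteq> 0" "g b \<noteq> 0" "a + b = w" "compat vs n om a b" using km_supp[OF nz] by blast
    obtain \<sigma> where s: "\<sigma> \<in> FAN" "a \<in> \<sigma>" "b \<in> \<sigma>" using ab(4) by (auto simp: compat_def)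
    obtain S where S: "S \<in> C" "\<sigma> = cn S" using fan_cone[OF s(1)] by blast
    have "w \<in> \<sigma>" using ab(3) s S cone_add by blast
    hence "w \<in> UF" using s(1) by (auto simp: UF_def)
    moreover have "a \<in> lattice" "b \<in> lattice" using assms ab by (auto simp: Good_def)
    hence "w \<in> lattice" using ab(3) lat_add by blast
    ultimately show ?thesis by simp
  qed
  thus ?thesis using fin by (auto simp: Good_def)
qed

lemma Good_mono: "Good X f \<Longrightarrow> X \<subseteq> Y \<Longrightarrow> Good Y f"
  unfolding Good_def by blast

lemma zero_UF: "0 \<in> UF"
  using cell_exists cone_zero by (auto simp: UF_def fan_def)

lemma Good_monoI: "x \<in> X \<Longrightarrow> Good X (mono x)"
  unfolding Good_def mono_def by auto

lemma Good_add: "Good X f \<Longrightarrow> Good X g \<Longrightarrow> Good X (\<lambda>u. f u + g u)"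
proof -
  assume a: "Good X f" "Good X g"
  have "{w. f w + g w \<noteq> 0} \<subseteq> {w. f w \<noteq> 0} \<union> {w. g w \<noteq> 0}" by auto
  thus ?thesis using a unfolding Good_def by (meson finite_Un finite_subset order_trans le_sup_iff)
qed

lemma Rsub_good: "f \<in> Rsub vs n om \<Longrightarrow> Good (UF \<inter> lattice) f"
proof (induction rule: Rsub.induct)
  case (const c)
  have "{w. c * mono 0 w \<noteq> 0} \<subseteq> {0}" by (auto simp: mono_def split: if_splits)
  thus ?case using zero_UF lat_zero unfolding Good_def by (auto intro: finite_subset)
next
  case (gen j)
  have "vs j \<in> ray vs j" unfolding ray_def by (rule CollectI, rule exI[of _ 1]) simp
  hence "vs j \<in> UF" using gen by (auto simp: UF_def)
  thus ?case using vs_lat gen by (intro Good_monoI) auto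
next
  case (add f g) thus ?case using Good_add by blast
next
  case (mult f g) thus ?case using km_good Good_mono by (meson inf_le2)
qed

lemma kprod_good: "set js \<subseteq> {..<n} \<Longrightarrow> Good lattice (kprod_list vs n om (map (\<lambda>j. mono (vs j)) js))"
proof (induction js)
  case Nil thus ?case by (simp add: kprod_list_def Good_monoI lat_zero)
next
  case (Cons j js)
  have "kprod_list vs n om (map (\<lambda>j. mono (vs j)) (j # js)) = km (mono (vs j)) (kprod_list vs n om (map (\<lambda>j. mono (vs j)) js))"
    by (simp add: kprod_list_def)
  moreover have "Good lattice (mono (vs j))" using Cons.prems vs_lat by (intro Good_monoI) auto
  moreover have "Good lattice (kprod_list vs n om (map (\<lambda>j. mono (vs j)) js))" using Cons by simp
  ultimately have "Good (UF \<inter> lattice) (kprod_list vs n om (map (\<lambda>j. mono (vs j)) (j # js)))"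
    using km_good by simp
  thus ?case by (rule Good_mono) simp
qed

lemma Box_lat: "x \<in> Box vs n om \<Longrightarrow> x \<in> lattice"
  by (simp add: Box_def)

lemma Box_cone:
  assumes "x \<in> Box vs n om" shows "\<exists>S\<in>C. x \<in> cn S"
proof -
  obtain \<sigma> q where s: "maximal_cone vs n om \<sigma>" "x = (\<Sum>j<n. q j *\<^sub>R vs j)" "\<forall>j<n. 0 \<le> q j \<and> q j < 1"
    "\<forall>j<n. q j \<noteq> 0 \<longrightarrow> ray vs j face_of \<sigma>"
    using assms by (auto simp: Box_def)
  have "\<sigma> \<in> FAN" using s(1) by (simp add: maximal_cone_def)
  then obtain S where S: "S \<in> C" "\<sigma> = cn S" using fan_cone by blast
  have "q j *\<^sub>R vs j \<in> cn S" if "j < n" for j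
  proof (cases "q j = 0")
    case True thus ?thesis by (simp add: cone_zero)
  next
    case False
    hence "ray vs j \<subseteq> cn S" using s(4) that S(2) face_of_imp_subset by blast
    moreover have "vs j \<in> ray vs j" unfolding ray_def by (rule CollectI, rule exI[of _ 1]) simp
    ultimately show ?thesis using cone_scale s(3) that by auto
  qed
  hence "x \<in> cn S" unfolding s(2) by (intro cone_sum_mem) auto
  thus ?thesis using S by blast
qed

definition Jset where
  "Jset x r = {j. j < n \<and> r j < 0 \<and> ray vs j \<in> FAN \<and> \<not> (ray vs j face_of sigma_of vs n om x)}"

lemma MgensE:
  assumes "g \<in> Mgens vs n om \<beta>"
  obtains x r where "g = km (mono x) (kprod_list vs n om (map (\<lambda>j. mono (vs j)) (sorted_list_of_set (Jset x r))))"
    "x \<in> Box vs n om" "x + (\<Sum>j<n. of_int (r j) *\<^sub>R vs j) = \<beta>" "\<forall>j<n. ray vs j \<notin> FAN \<longrightarrow> r j \<ge> 0"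
  using assms unfolding Mgens_def mem_Collect_eq Jset_def[symmetric]
  by (elim exE conjE) (rule that; assumption)

lemma MgensI:
  assumes "x \<in> Box vs n om" "x + (\<Sum>j<n. of_int (r j) *\<^sub>R vs j) = \<beta>" "\<forall>j<n. ray vs j \<notin> FAN \<longrightarrow> r j \<ge> 0"
  shows "km (mono x) (kprod_list vs n om (map (\<lambda>j. mono (vs j)) (sorted_list_of_set (Jset x r)))) \<in> Mgens vs n om \<beta>"
  using assms unfolding Mgens_def mem_Collect_eq Jset_def by blast

lemma Mgens_good:
  assumes "g \<in> Mgens vs n om \<beta>" shows "Good (UF \<inter> lattice) g"
proof -
  obtain x r where g: "g = km (mono x) (kprod_list vs n om (map (\<lambda>j. mono (vs j)) (sorted_list_of_set (Jset x r))))"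
      and x: "x \<in> Box vs n om" and "x + (\<Sum>j<n. of_int (r j) *\<^sub>R vs j) = \<beta>" and "\<forall>j<n. ray vs j \<notin> FAN \<longrightarrow> r j \<ge> 0"
    by (rule MgensE[OF assms])
  have "Good lattice (mono x)" using Box_lat[OF x] by (rule Good_monoI)
  moreover have "Good lattice (kprod_list vs n om (map (\<lambda>j. mono (vs j)) (sorted_list_of_set (Jset x r))))"
    by (rule kprod_good) (auto simp: Jset_def)
  ultimately show ?thesis unfolding g by (rule km_good)
qed

lemma Mmod_good: "f \<in> Mmod vs n om \<beta> \<Longrightarrow> Good (UF \<inter> lattice) f"
  unfolding Mmod_def
proof (induction rule: Rspan.induct)
  case zero thus ?case by (simp add: Good_def)
next
  case (smul r g)
  have "Good lattice r" using Rsub_good[OF smul(1)] Good_mono by blast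
  moreover have "Good lattice g" using Mgens_good[OF smul(2)] Good_mono by blast
  ultimately show ?case by (rule km_good)
next
  case (add f g) thus ?case using Good_add by blast
qed

lemma partA: "Mmod vs n om \<beta> \<subseteq> CK vs n"
proof
  fix f assume "f \<in> Mmod vs n om \<beta>"
  hence "Good (UF \<inter> lattice) f" by (rule Mmod_good)
  thus "f \<in> CK vs n" using UF_K K_eq unfolding Good_def CK_def by auto
qed

end

context ctx begin

abbreviation "KK \<equiv> cn {..<n}"

lemma K_convex: "convex KK"
  unfolding convex_def using cone_add cone_scale by auto

lemma int_add: assumes "a \<in> KK" "b \<in> interior KK" shows "a + b \<in> interior KK"
proof -
  obtain e where e: "e > 0" "ball b e \<subseteq> KK" using assms(2) mem_interior by blast
  have "ball (a + b) e \<subseteq> KK"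
  proof
    fix w assume "w \<in> ball (a + b) e"
    hence "w - a \<in> ball b e" by (simp add: dist_norm algebra_simps)
    hence "w - a \<in> KK" using e by blast
    hence "a + (w - a) \<in> KK" using cone_add assms(1) by blast
    thus "w \<in> KK" by simp
  qed
  thus ?thesis using e(1) mem_interior by blast
qed

lemma int_scale: assumes "t > 0" "x \<in> interior KK" shows "t *\<^sub>R x \<in> interior KK"
proof -
  obtain e where e: "e > 0" "ball x e \<subseteq> KK" using assms(2) mem_interior by blast
  have "ball (t *\<^sub>R x) (t * e) \<subseteq> KK"
  proof
    fix w assume w: "w \<in> ball (t *\<^sub>R x) (t * e)"
    have "dist x ((1 / t) *\<^sub>R w) = dist (t *\<^sub>R x) w / t"
    proof -
      have "x - (1 / t) *\<^sub>R w = (1 / t) *\<^sub>R (t *\<^sub>R x - w)" using assms(1) by (simp add: algebra_simps)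
      thus ?thesis using assms(1) by (simp add: dist_norm)
    qed
    also have "\<dots> < e" using w assms(1) by (simp add: field_simps)
    finally have wK: "(1 / t) *\<^sub>R w \<in> KK" using e by auto
    have "t *\<^sub>R ((1 / t) *\<^sub>R w) \<in> KK" by (rule cone_scale) (use assms(1) wK in auto)
    thus "w \<in> KK" using assms(1) by simp
  qed
  thus ?thesis using e(1) assms(1) mem_interior by (metis mult_pos_pos)
qed

lemma UF_lat_K: "Good (UF \<inter> lattice) f \<Longrightarrow> f w \<noteq> 0 \<Longrightarrow> w \<in> KK \<and> w \<in> lattice"
  unfolding Good_def using UF_K by auto

lemma gen_interior:
  assumes mb: "- \<beta> \<in> interior KK" and gM: "g \<in> Mgens vs n om \<beta>"
  shows "Good (interior KK \<inter> lattice) g"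
proof -
  obtain x r where g: "g = km (mono x) (kprod_list vs n om (map (\<lambda>j. mono (vs j)) (sorted_list_of_set (Jset x r))))"
      and x: "x \<in> Box vs n om" and bx: "x + (\<Sum>j<n. of_int (r j) *\<^sub>R vs j) = \<beta>"
      and rp: "\<forall>j<n. ray vs j \<notin> FAN \<longrightarrow> r j \<ge> 0"
    by (rule MgensE[OF gM])
  define J where "J = Jset x r"
  have Jsub: "J \<subseteq> {..<n}" by (auto simp: J_def Jset_def)
  have finJ: "finite J" using Jsub finite_subset by blast
  have good: "Good (UF \<inter> lattice) g" using Mgens_good[OF gM] .
  have yint: "y \<in> interior KK" if yg: "g y \<noteq> 0" for y
  proof (rule ccontr)
    assume ynot: "y \<notin> interior KK"
    have yK: "y \<in> KK" using UF_lat_K[OF good yg] by blast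
    have "y \<in> (\<lambda>b. x + b) ` {w. kprod_list vs n om (map (\<lambda>j. mono (vs j)) (sorted_list_of_set J)) w \<noteq> 0}"
      using km_supp_mono yg unfolding g J_def by blast
    hence "y = x + sum_list (map vs (sorted_list_of_set J))" using kprod_supp by blast
    hence yeq: "y = x + (\<Sum>j\<in>J. vs j)" using finJ by (simp add: sum_list_distinct_conv_sum_set)
    have cvx1: "convex {y}" by simp
    have cvx2: "convex (interior KK)" using K_convex convex_interior by blast
    have disj: "{y} \<inter> interior KK = {}" using ynot by blast
    obtain \<xi> b where xb: "\<xi> \<noteq> 0" "\<forall>z\<in>{y}. \<xi> \<bullet> z \<le> b" "\<forall>z\<in>interior KK. \<xi> \<bullet> z \<ge> b"
      using separating_hyperplane_sets[OF cvx1 cvx2 _ _ disj] mb by blast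
    have xy: "\<xi> \<bullet> y \<le> b" using xb(2) by simp
    have geK: "\<xi> \<bullet> q \<ge> \<xi> \<bullet> y" if qK: "q \<in> KK" for q
    proof (rule ccontr)
      assume neg: "\<not> \<xi> \<bullet> q \<ge> \<xi> \<bullet> y"
      define d where "d = \<xi> \<bullet> y - \<xi> \<bullet> q"
      have dpos: "d > 0" using neg by (simp add: d_def)
      define \<epsilon> where "\<epsilon> = d / (2 * (\<bar>\<xi> \<bullet> (- \<beta>)\<bar> + 1))"
      have epos: "\<epsilon> > 0" using dpos by (simp add: \<epsilon>_def)
      have "q + \<epsilon> *\<^sub>R (- \<beta>) \<in> interior KK" using int_add[OF qK int_scale[OF epos mb]] .
      hence "\<xi> \<bullet> (q + \<epsilon> *\<^sub>R (- \<beta>)) \<ge> b" using xb(3) by blast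
      moreover have "\<xi> \<bullet> (q + \<epsilon> *\<^sub>R (- \<beta>)) = \<xi> \<bullet> q + \<epsilon> * (\<xi> \<bullet> (- \<beta>))" by (simp add: inner_add_right inner_diff_right)
      moreover have "\<epsilon> * (\<xi> \<bullet> (- \<beta>)) \<le> \<epsilon> * \<bar>\<xi> \<bullet> (- \<beta>)\<bar>" using epos by (intro mult_left_mono) auto
      moreover have "\<epsilon> * \<bar>\<xi> \<bullet> (- \<beta>)\<bar> < d"
      proof -
        have "\<epsilon> * \<bar>\<xi> \<bullet> (- \<beta>)\<bar> = d * (\<bar>\<xi> \<bullet> (- \<beta>)\<bar> / (2 * (\<bar>\<xi> \<bullet> (- \<beta>)\<bar> + 1)))"
          by (simp add: \<epsilon>_def)
        also have "\<dots> < d * 1"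
          using dpos by (intro mult_strict_left_mono) (auto simp: field_simps)
        finally show ?thesis by simp
      qed
      ultimately show False using xy by (simp add: d_def)
    qed
    have y0: "\<xi> \<bullet> y = 0"
    proof -
      have "\<xi> \<bullet> 0 \<ge> \<xi> \<bullet> y" using geK cone_zero by blast
      moreover have "\<xi> \<bullet> (2 *\<^sub>R y) \<ge> \<xi> \<bullet> y" using geK[OF cone_scale[OF _ yK, of 2]] by simp
      ultimately show ?thesis by simp
    qed
    have nnK: "\<xi> \<bullet> q \<ge> 0" if "q \<in> KK" for q using geK[OF that] y0 by simp
    have bpos: "\<xi> \<bullet> (- \<beta>) > 0"
    proof -
      obtain e where e: "e > 0" "ball (- \<beta>) e \<subseteq> KK" using mb mem_interior by blast
      define q where "q = - \<beta> - (e / 2 / norm \<xi>) *\<^sub>R \<xi>"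
      have nx: "norm \<xi> > 0" using xb(1) by simp
      have "dist (- \<beta>) q = e / 2" using nx e(1) by (simp add: q_def dist_norm)
      hence "q \<in> KK" using e by auto
      hence "\<xi> \<bullet> q \<ge> 0" by (rule nnK)
      moreover have "\<xi> \<bullet> q = \<xi> \<bullet> (- \<beta>) - (e / 2 / norm \<xi>) * (norm \<xi>)^2"
        by (simp add: q_def inner_diff_right power2_norm_eq_inner)
      moreover have "(e / 2 / norm \<xi>) * (norm \<xi>)^2 > 0" using nx e by simp
      ultimately show ?thesis by linarith
    qed
    obtain S0 where S0: "S0 \<in> C" "x \<in> cn S0" using Box_cone[OF x] by blast
    have xK: "x \<in> KK" using S0 cell_cone_K K_eq by auto
    have vK: "vs j \<in> KK" if "j < n" for j using cone_gen[of j "{..<n}"] that by simp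
    have x0: "\<xi> \<bullet> x = 0" and J0: "\<forall>j\<in>J. \<xi> \<bullet> vs j = 0"
    proof -
      have "\<xi> \<bullet> x + (\<Sum>j\<in>J. \<xi> \<bullet> vs j) = 0" using y0 yeq by (simp add: inner_add_right inner_sum_right)
      moreover have "\<xi> \<bullet> x \<ge> 0" using nnK xK by blast
      moreover have nn: "\<forall>j\<in>J. \<xi> \<bullet> vs j \<ge> 0" using nnK vK Jsub by blast
      moreover have "(\<Sum>j\<in>J. \<xi> \<bullet> vs j) \<ge> 0" using nn by (simp add: sum_nonneg)
      ultimately have "\<xi> \<bullet> x = 0" "(\<Sum>j\<in>J. \<xi> \<bullet> vs j) = 0" by linarith+
      thus "\<xi> \<bullet> x = 0" "\<forall>j\<in>J. \<xi> \<bullet> vs j = 0"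
        using sum_nonneg_eq_0_iff[OF finJ, of "\<lambda>j. \<xi> \<bullet> vs j"] nn by auto
    qed
    obtain T0 mu where T0: "T0 \<in> C" "sigma_of vs n om x = cn T0" "x = (\<Sum>i\<in>T0. mu i *\<^sub>R vs i)"
      "\<forall>i\<in>T0. mu i > 0" "\<forall>T\<in>C. x \<in> cn T \<longrightarrow> T0 \<subseteq> T"
      using sigma_char[OF S0] by blast
    have T0sub: "T0 \<subseteq> {..<n}" using cell_sub T0(1) by blast
    have finT0: "finite T0" using cell_fin T0(1) by blast
    have T0z: "\<forall>i\<in>T0. \<xi> \<bullet> vs i = 0"
    proof -
      have nn: "\<forall>i\<in>T0. mu i * (\<xi> \<bullet> vs i) \<ge> 0"
      proof
        fix i assume i: "i \<in> T0"
        have "mu i \<ge> 0" using T0(4) i by auto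
        moreover have "\<xi> \<bullet> vs i \<ge> 0" using nnK vK T0sub i by blast
        ultimately show "mu i * (\<xi> \<bullet> vs i) \<ge> 0" by simp
      qed
      have "(\<Sum>i\<in>T0. mu i * (\<xi> \<bullet> vs i)) = 0" using x0 T0(3) by (simp add: inner_sum_right)
      hence "\<forall>i\<in>T0. mu i * (\<xi> \<bullet> vs i) = 0" using sum_nonneg_eq_0_iff[OF finT0, of "\<lambda>i. mu i * (\<xi> \<bullet> vs i)"] nn by auto
      show ?thesis
      proof
        fix i assume i: "i \<in> T0"
        have "mu i * (\<xi> \<bullet> vs i) = 0" using \<open>\<forall>i\<in>T0. mu i * (\<xi> \<bullet> vs i) = 0\<close> i by blast
        moreover have "mu i \<noteq> 0" using T0(4) i by force
        ultimately show "\<xi> \<bullet> vs i = 0" by simp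
      qed
    qed
    have trm: "of_int (r j) * (\<xi> \<bullet> vs j) \<ge> 0" if jn: "j < n" for j
    proof (cases "r j \<ge> 0")
      case True thus ?thesis using nnK vK jn by auto
    next
      case False
      hence rayF: "ray vs j \<in> FAN" using rp jn by auto
      show ?thesis
      proof (cases "ray vs j face_of sigma_of vs n om x")
        case False
        hence "j \<in> J" using rayF jn \<open>\<not> r j \<ge> 0\<close> by (auto simp: J_def Jset_def)
        thus ?thesis using J0 by simp
      next
        case True
        have "vs j \<in> ray vs j" unfolding ray_def by (rule CollectI, rule exI[of _ 1]) simp
        hence "vs j \<in> cn T0" using face_of_imp_subset[OF True] T0(2) by auto
        then obtain nu where nu: "vs j = (\<Sum>i\<in>T0. nu i *\<^sub>R vs i)" by (auto simp: cone_of_def)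
        have "\<xi> \<bullet> vs j = (\<Sum>i\<in>T0. nu i * (\<xi> \<bullet> vs i))" by (subst nu) (simp add: inner_sum_right)
        also have "\<dots> = 0" using T0z by simp
        finally show ?thesis by simp
      qed
    qed
    have "\<xi> \<bullet> \<beta> = \<xi> \<bullet> x + (\<Sum>j<n. of_int (r j) * (\<xi> \<bullet> vs j))"
      unfolding bx[symmetric] by (simp add: inner_add_right inner_sum_right)
    also have "\<dots> \<ge> 0" using x0 trm by (auto intro!: sum_nonneg)
    finally have "\<xi> \<bullet> \<beta> \<ge> 0" .
    thus False using bpos by simp
  qed
  show ?thesis using good yint unfolding Good_def by auto
qed

lemma partC:
  assumes mb: "- \<beta> \<in> interior (Kcone vs n)"
  shows "Mmod vs n om \<beta> \<subseteq> CKint vs n"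
proof
  have mb': "- \<beta> \<in> interior KK" using mb K_eq by simp
  fix f assume "f \<in> Mmod vs n om \<beta>"
  hence "Good (interior KK \<inter> lattice) f" unfolding Mmod_def
  proof (induction rule: Rspan.induct)
    case zero thus ?case by (simp add: Good_def)
  next
    case (smul r g)
    have gr: "Good (UF \<inter> lattice) r" using Rsub_good[OF smul(1)] .
    have gg: "Good (interior KK \<inter> lattice) g" using gen_interior[OF mb' smul(2)] .
    have "Good lattice r" "Good lattice g" using gr gg Good_mono by blast+
    hence g1: "Good (UF \<inter> lattice) (km r g)" by (rule km_good)
    have "w \<in> interior KK" if nz: "km r g w \<noteq> 0" for w
    proof -
      obtain a b where ab: "r a \<noteq> 0" "g b \<noteq> 0" "a + b = w" using km_supp[OF nz] by blast
      have "a \<in> KK" using UF_lat_K[OF gr ab(1)] by blast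
      moreover have "b \<in> interior KK" using gg ab(2) by (auto simp: Good_def)
      ultimately show ?thesis using int_add ab(3) by blast
    qed
    thus ?case using g1 unfolding Good_def by auto
  next
    case (add f g) thus ?case using Good_add by blast
  qed
  thus "f \<in> CKint vs n" unfolding Good_def CKint_def using K_eq by auto
qed

end

context ctx begin

lemma Rsub_mono0: "mono 0 \<in> Rsub vs n om"
proof -
  have "(\<lambda>u. 1 * mono 0 u) \<in> Rsub vs n om" by (rule Rsub.const)
  thus ?thesis by simp
qed

lemma Rsub_scaled:
  assumes "mono z \<in> Rsub vs n om" "S \<in> C" "z \<in> cn S"
  shows "(\<lambda>u. c * mono z u) \<in> Rsub vs n om"
proof -
  have "compat vs n om 0 z" using compat_cone[OF assms(2) cone_zero assms(3)] .
  hence "km (\<lambda>u. c * mono 0 u) (mono z) = (\<lambda>u. c * mono z u)" using km_mono[of c 0 z] by simp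
  moreover have "km (\<lambda>u. c * mono 0 u) (mono z) \<in> Rsub vs n om"
    by (rule Rsub.mult[OF Rsub.const assms(1)])
  ultimately show ?thesis by simp
qed

lemma Rsub_add:
  assumes "T \<in> C" "z1 \<in> cn T" "z2 \<in> cn T" "mono z1 \<in> Rsub vs n om" "mono z2 \<in> Rsub vs n om"
  shows "mono (z1 + z2) \<in> Rsub vs n om"
proof -
  have "compat vs n om z1 z2" using compat_cone assms(1-3) by blast
  hence "km (mono z1) (mono z2) = mono (z1 + z2)" using km_mono1 by simp
  thus ?thesis using Rsub.mult[OF assms(4,5)] by simp
qed

lemma Rsub_gen:
  assumes "T \<in> C" "j \<in> T" shows "mono (vs j) \<in> Rsub vs n om"
proof -
  have "{j} \<in> C" using cell_subset assms by blast
  hence "ray vs j \<in> FAN" using cone_single by (metis fan_def image_eqI)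
  moreover have "j < n" using cell_sub assms by blast
  ultimately show ?thesis by (intro Rsub.gen)
qed

lemma Rsub_comb:
  assumes T: "T \<in> C" and A: "A \<subseteq> T"
  shows "mono (\<Sum>j\<in>A. of_nat (k j) *\<^sub>R vs j) \<in> Rsub vs n om"
proof -
  have fT: "finite T" using cell_fin T by blast
  have finA: "finite A" using finite_subset[OF A fT] .
  have inT: "(\<Sum>j\<in>B. of_nat (k j) *\<^sub>R vs j) \<in> cn T" if "B \<subseteq> T" for B
  proof -
    have "finite B" using finite_subset[OF that fT] .
    thus ?thesis using that by (intro cone_sum_mem) (auto intro!: cone_scale cone_gen fT)
  qed
  have single: "mono (of_nat m *\<^sub>R vs j) \<in> Rsub vs n om" if "j \<in> T" for j m
  proof (induction m)
    case 0 thus ?case using Rsub_mono0 by simp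
  next
    case (Suc m)
    have vj: "vs j \<in> cn T" using cone_gen[OF that fT] .
    have "mono (vs j + of_nat m *\<^sub>R vs j) \<in> Rsub vs n om"
      by (rule Rsub_add[OF T vj cone_scale[OF _ vj] Rsub_gen[OF T that] Suc]) simp
    thus ?case by (simp add: scaleR_add_left add.commute)
  qed
  show ?thesis using finA A
  proof (induction A rule: finite_induct)
    case empty thus ?case using Rsub_mono0 by simp
  next
    case (insert a A)
    have aT: "a \<in> T" using insert by blast
    have "mono (of_nat (k a) *\<^sub>R vs a + (\<Sum>j\<in>A. of_nat (k j) *\<^sub>R vs j)) \<in> Rsub vs n om"
      by (rule Rsub_add[OF T cone_scale[OF _ cone_gen[OF aT fT]] inT single[OF aT] insert(3)]) (use insert in auto)
    thus ?case using insert by simp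
  qed
qed

lemma mono_in:
  assumes wi: "w \<in> interior KK" and wl: "w \<in> lattice" and bl: "\<beta> \<in> lattice"
  shows "(\<lambda>u. c * mono w u) \<in> Mmod vs n om \<beta>"
proof -
  obtain S where S: "S \<in> C" "w \<in> cn S" using cover wi by blast
  obtain cc where cc: "w = (\<Sum>j\<in>S. cc j *\<^sub>R vs j)" "\<forall>j\<in>S. cc j \<ge> 0" using S(2) by (auto simp: cone_of_def)
  define \<tau> where "\<tau> = {j \<in> S. cc j > 0}"
  have tC: "\<tau> \<in> C" using cell_subset[OF S(1)] by (auto simp: \<tau>_def)
  have ft: "finite \<tau>" using cell_fin tC by blast
  have tsub: "\<tau> \<subseteq> {..<n}" using cell_sub tC by blast
  have cpos: "\<forall>j\<in>\<tau>. cc j > 0" by (auto simp: \<tau>_def)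
  have wt: "w = (\<Sum>j\<in>\<tau>. cc j *\<^sub>R vs j)" unfolding cc(1) using cell_fin[OF S(1)] cc(2)
    by (intro sum.mono_neutral_cong_right) (auto simp: \<tau>_def)
  define U where "U = (\<Sum>j\<in>\<tau>. vs j)"
  have Uint: "U \<in> interior KK"
  proof -
    define m where "m = Max (insert 1 (cc ` \<tau>))"
    have m1: "m \<ge> 1" unfolding m_def using ft by simp
    have mc: "cc j \<le> m" if "j \<in> \<tau>" for j unfolding m_def using ft that by simp
    have "m *\<^sub>R U - w = (\<Sum>j\<in>\<tau>. (m - cc j) *\<^sub>R vs j)"
      by (simp add: U_def wt scaleR_sum_right scaleR_diff_left sum_subtractf)
    also have "\<dots> \<in> cn \<tau>" using mc by (intro cone_comb) auto
    finally have "m *\<^sub>R U - w \<in> KK" using cone_mono[OF tsub] by blast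
    hence "(m *\<^sub>R U - w) + w \<in> interior KK" using int_add wi by blast
    hence mU: "m *\<^sub>R U \<in> interior KK" by simp
    have "(1 / m) *\<^sub>R (m *\<^sub>R U) \<in> interior KK" by (rule int_scale[OF _ mU]) (use m1 in simp)
    moreover have "(1 / m) *\<^sub>R (m *\<^sub>R U) = U" using m1 by simp
    ultimately show ?thesis by simp
  qed
  define x where "x = (\<Sum>j\<in>\<tau>. frac (cc j) *\<^sub>R vs j)"
  have wx: "w = x + (\<Sum>j\<in>\<tau>. of_int \<lfloor>cc j\<rfloor> *\<^sub>R vs j)"
    unfolding wt x_def sum.distrib[symmetric] scaleR_add_left[symmetric] by (intro sum.cong) (auto simp: frac_def)
  have xl: "x \<in> lattice"
  proof -
    have "x = w - (\<Sum>j\<in>\<tau>. of_int \<lfloor>cc j\<rfloor> *\<^sub>R vs j)" using wx by simp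
    thus ?thesis using lat_diff[OF wl lat_comb[OF tsub]] by simp
  qed
  have xt: "x \<in> cn \<tau>" unfolding x_def by (intro cone_comb) auto
  define Fam where "Fam = {\<sigma> \<in> FAN. cn \<tau> \<subseteq> \<sigma>}"
  have finFAN: "finite FAN"
  proof -
    have "C \<subseteq> Pow {..<n}" using cell_sub by auto
    hence "finite C" using finite_subset by blast
    thus ?thesis unfolding fan_def by simp
  qed
  have finFam: "finite Fam" using finFAN by (simp add: Fam_def)
  have neFam: "Fam \<noteq> {}" using tC by (auto simp: Fam_def fan_def)
  obtain \<sigma>m where sm: "\<sigma>m \<in> Fam" "\<forall>b\<in>Fam. \<sigma>m \<le> b \<longrightarrow> \<sigma>m = b"
    using finite_has_maximal[OF finFam neFam] by blast
  have maxc: "maximal_cone vs n om \<sigma>m"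
    unfolding maximal_cone_def
  proof (intro conjI ballI impI)
    show "\<sigma>m \<in> FAN" using sm(1) by (simp add: Fam_def)
    fix \<tau>' assume "\<tau>' \<in> FAN" "\<sigma>m \<subseteq> \<tau>'"
    moreover have "cn \<tau> \<subseteq> \<sigma>m" using sm(1) by (simp add: Fam_def)
    ultimately have "\<tau>' \<in> Fam" by (auto simp: Fam_def)
    thus "\<tau>' = \<sigma>m" using sm(2) \<open>\<sigma>m \<subseteq> \<tau>'\<close> by force
  qed
  obtain Sm where Sm: "Sm \<in> C" "\<sigma>m = cn Sm" using fan_cone sm(1) by (auto simp: Fam_def)
  have tSm: "\<tau> \<subseteq> Sm"
  proof
    fix j assume jt: "j \<in> \<tau>"
    have "vs j \<in> cn \<tau>" using cone_gen[OF jt ft] .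
    moreover have "cn \<tau> \<subseteq> cn Sm" using sm(1) Sm(2) by (simp add: Fam_def)
    ultimately have "vs j \<in> cn (\<tau> \<inter> Sm)" using cone_Int[OF tC Sm(1)] by blast
    then obtain nu where nu: "vs j = (\<Sum>i\<in>\<tau> \<inter> Sm. nu i *\<^sub>R vs i)" by (auto simp: cone_of_def)
    have "(\<Sum>i\<in>\<tau>. (if i \<in> Sm then nu i else 0) *\<^sub>R vs i) = (\<Sum>i\<in>\<tau> \<inter> Sm. nu i *\<^sub>R vs i)"
      using ft by (intro sum.mono_neutral_cong_right) auto
    also have "\<dots> = (\<Sum>i\<in>\<tau>. (if i = j then 1 else 0) *\<^sub>R vs i)" using nu sum_single[OF ft jt, of 1] by simp
    finally have "(if j \<in> Sm then nu j else 0) = (if j = j then 1 else (0::real))"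
      by (rule coeff_unique[OF tC _ jt])
    thus "j \<in> Sm" by (auto split: if_splits)
  qed
  define q where "q = (\<lambda>j. if j \<in> \<tau> then frac (cc j) else 0)"
  have xq: "x = (\<Sum>j<n. q j *\<^sub>R vs j)" unfolding x_def q_def
    using tsub by (intro sum.mono_neutral_cong_left) auto
  have q01: "\<forall>j<n. 0 \<le> q j \<and> q j < 1" by (auto simp: q_def frac_lt_1)
  have qface: "\<forall>j<n. q j \<noteq> 0 \<longrightarrow> ray vs j face_of \<sigma>m"
  proof (intro allI impI)
    fix j assume "j < n" "q j \<noteq> 0"
    hence "j \<in> \<tau>" by (auto simp: q_def split: if_splits)
    hence "j \<in> Sm" using tSm by blast
    thus "ray vs j face_of \<sigma>m" using ray_face[OF Sm(1)] Sm(2) by simp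
  qed
  have xBox: "x \<in> Box vs n om" unfolding Box_def using xl maxc xq q01 qface by blast
  have bxl: "\<beta> - x \<in> lattice" using lat_diff bl xl by blast
  obtain r where r: "(\<Sum>j<n. of_int (r j) *\<^sub>R vs j) = \<beta> - x" "\<forall>j<n. j \<notin> \<tau> \<longrightarrow> r j \<ge> 0"
    using represent[OF tC Uint[unfolded U_def] bxl] by blast
  have bx: "x + (\<Sum>j<n. of_int (r j) *\<^sub>R vs j) = \<beta>" using r(1) by simp
  have rp: "\<forall>j<n. ray vs j \<notin> FAN \<longrightarrow> r j \<ge> 0"
  proof (intro allI impI)
    fix j assume j: "j < n" "ray vs j \<notin> FAN"
    have "j \<notin> \<tau>"
    proof
      assume "j \<in> \<tau>"
      hence "{j} \<in> C" using cell_subset tC by blast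
      hence "ray vs j \<in> FAN" using cone_single by (metis fan_def image_eqI)
      thus False using j by blast
    qed
    thus "r j \<ge> 0" using r(2) j by blast
  qed
  define J where "J = Jset x r"
  have gM: "km (mono x) (kprod_list vs n om (map (\<lambda>j. mono (vs j)) (sorted_list_of_set J))) \<in> Mgens vs n om \<beta>"
    unfolding J_def by (rule MgensI[OF xBox bx rp])
  have Jt: "J \<subseteq> \<tau>" using r(2) by (force simp: J_def Jset_def)
  have finJ: "finite J" using finite_subset[OF Jt ft] .
  obtain T0 mu where T0: "T0 \<in> C" "sigma_of vs n om x = cn T0" "x = (\<Sum>i\<in>T0. mu i *\<^sub>R vs i)"
      "\<forall>i\<in>T0. mu i > 0" "\<forall>T\<in>C. x \<in> cn T \<longrightarrow> T0 \<subseteq> T"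
    using sigma_char[OF tC xt] by blast
  have T0t: "T0 \<subseteq> \<tau>" using T0(5) tC xt by blast
  have fracJ: "frac (cc j) = 0" if jJ: "j \<in> J" for j
  proof (rule ccontr)
    assume nz: "frac (cc j) \<noteq> 0"
    have jt: "j \<in> \<tau>" using Jt jJ by blast
    have "(\<Sum>i\<in>\<tau>. (if i \<in> T0 then mu i else 0) *\<^sub>R vs i) = (\<Sum>i\<in>T0. mu i *\<^sub>R vs i)"
      using ft T0t by (intro sum.mono_neutral_cong_right) auto
    also have "\<dots> = (\<Sum>i\<in>\<tau>. frac (cc i) *\<^sub>R vs i)" using T0(3) x_def by simp
    finally have "(if j \<in> T0 then mu j else 0) = frac (cc j)" by (rule coeff_unique[OF tC _ jt])
    hence "j \<in> T0" using nz by (auto split: if_splits)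
    hence "ray vs j face_of sigma_of vs n om x" using ray_face[OF T0(1)] T0(2) by simp
    thus False using jJ by (simp add: J_def Jset_def)
  qed
  have fl1: "\<lfloor>cc j\<rfloor> \<ge> 1" if "j \<in> J" for j
  proof -
    have "cc j = of_int \<lfloor>cc j\<rfloor>" using fracJ[OF that] by (simp add: frac_def)
    moreover have "cc j > 0" using cpos Jt that by blast
    ultimately show ?thesis by linarith
  qed
  define sJ where "sJ = (\<Sum>j\<in>J. vs j)"
  have sJt: "sJ \<in> cn \<tau>" unfolding sJ_def using finJ Jt ft by (intro cone_sum_mem) (auto intro: cone_gen)
  have kp: "kprod_list vs n om (map (\<lambda>j. mono (vs j)) (sorted_list_of_set J)) = mono sJ"
    using kprod_mono[OF tC, of "sorted_list_of_set J"] finJ Jt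
    by (simp add: sJ_def sum_list_distinct_conv_sum_set)
  have gx: "km (mono x) (kprod_list vs n om (map (\<lambda>j. mono (vs j)) (sorted_list_of_set J))) = mono (x + sJ)"
    unfolding kp using km_mono1 compat_cone[OF tC xt sJt] by simp
  define k where "k = (\<lambda>j. nat \<lfloor>cc j\<rfloor> - (if j \<in> J then 1 else 0))"
  have kr: "real (k j) = of_int \<lfloor>cc j\<rfloor> - (if j \<in> J then 1 else 0)" if "j \<in> \<tau>" for j
  proof -
    have "cc j > 0" using cpos that by blast
    hence h0: "\<lfloor>cc j\<rfloor> \<ge> 0" by simp
    show ?thesis
    proof (cases "j \<in> J")
      case True
      have h1: "\<lfloor>cc j\<rfloor> \<ge> 1" using fl1 True by blast
      hence "k j = nat \<lfloor>cc j\<rfloor> - 1" using True by (simp add: k_def)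
      moreover have "nat \<lfloor>cc j\<rfloor> \<ge> 1" using h1 by linarith
      ultimately have "real (k j) = real (nat \<lfloor>cc j\<rfloor>) - 1" by (simp add: of_nat_diff)
      thus ?thesis using h0 True by simp
    next
      case False thus ?thesis using h0 by (simp add: k_def)
    qed
  qed
  define \<rho> where "\<rho> = (\<Sum>j\<in>\<tau>. of_nat (k j) *\<^sub>R vs j)"
  have \<rho>t: "\<rho> \<in> cn \<tau>" unfolding \<rho>_def by (intro cone_comb) auto
  have \<rho>R: "mono \<rho> \<in> Rsub vs n om" unfolding \<rho>_def by (rule Rsub_comb[OF tC]) simp
  have wsum: "\<rho> + (x + sJ) = w"
  proof -
    have "(\<Sum>j\<in>\<tau>. of_int \<lfloor>cc j\<rfloor> *\<^sub>R vs j) = (\<Sum>j\<in>\<tau>. of_nat (k j) *\<^sub>R vs j + (if j \<in> J then vs j else 0))"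
    proof (rule sum.cong)
      fix j assume jt: "j \<in> \<tau>"
      have e: "real_of_int \<lfloor>cc j\<rfloor> = real (k j) + (if j \<in> J then 1 else 0)" using kr[OF jt] by simp
      show "of_int \<lfloor>cc j\<rfloor> *\<^sub>R vs j = of_nat (k j) *\<^sub>R vs j + (if j \<in> J then vs j else 0)"
        by (cases "j \<in> J") (simp_all add: e scaleR_add_left)
    qed simp
    also have "\<dots> = \<rho> + (\<Sum>j\<in>\<tau>. if j \<in> J then vs j else 0)" by (simp add: \<rho>_def sum.distrib)
    also have "(\<Sum>j\<in>\<tau>. if j \<in> J then vs j else 0) = sJ"
      using sum.inter_restrict[OF ft, of vs J, symmetric] Jt by (simp add: sJ_def Int_absorb1)
    finally show ?thesis using wx by (simp add: algebra_simps)
  qed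
  have cR: "(\<lambda>u. c * mono \<rho> u) \<in> Rsub vs n om" by (rule Rsub_scaled[OF \<rho>R tC \<rho>t])
  have "km (\<lambda>u. c * mono \<rho> u) (mono (x + sJ)) = (\<lambda>u. c * mono w u)"
    using km_mono[of c \<rho> "x + sJ"] compat_cone[OF tC \<rho>t cone_add[OF xt sJt]] wsum by simp
  moreover have "km (\<lambda>u. c * mono \<rho> u) (mono (x + sJ)) \<in> Mmod vs n om \<beta>"
    unfolding Mmod_def using Rspan.smul[OF cR gM] gx by simp
  ultimately show ?thesis by simp
qed

lemma span_sum:
  "finite W \<Longrightarrow> (\<forall>w\<in>W. (\<lambda>u. h w u) \<in> Rspan vs n om G) \<Longrightarrow> (\<lambda>u. \<Sum>w\<in>W. h w u) \<in> Rspan vs n om G"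
proof (induction W rule: finite_induct)
  case empty thus ?case by (simp add: Rspan.zero)
next
  case (insert a W)
  have "(\<lambda>u. h a u + (\<Sum>w\<in>W. h w u)) \<in> Rspan vs n om G" using insert by (intro Rspan.add) auto
  thus ?case using insert by simp
qed

lemma partB:
  assumes bl: "\<beta> \<in> lattice" shows "CKint vs n \<subseteq> Mmod vs n om \<beta>"
proof
  fix f assume f: "f \<in> CKint vs n"
  define W where "W = {w. f w \<noteq> 0}"
  have finW: "finite W" and Wsub: "W \<subseteq> interior KK \<inter> lattice"
    using f K_eq by (auto simp: CKint_def W_def)
  have feq: "f = (\<lambda>u. \<Sum>w\<in>W. f w * mono w u)"
  proof
    fix u
    have "(\<Sum>w\<in>W. f w * mono w u) = (\<Sum>w\<in>W. if u = w then f w else 0)"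
      by (intro sum.cong) (auto simp: mono_def)
    also have "\<dots> = (if u \<in> W then f u else 0)" using finW by (simp add: sum.delta)
    also have "\<dots> = f u" by (auto simp: W_def)
    finally show "f u = (\<Sum>w\<in>W. f w * mono w u)" by simp
  qed
  have "(\<lambda>u. \<Sum>w\<in>W. f w * mono w u) \<in> Rspan vs n om (Mgens vs n om \<beta>)"
  proof (rule span_sum[OF finW], intro ballI)
    fix w assume "w \<in> W"
    hence "w \<in> interior KK" "w \<in> lattice" using Wsub by auto
    thus "(\<lambda>u. f w * mono w u) \<in> Rspan vs n om (Mgens vs n om \<beta>)"
      using mono_in[OF _ _ bl] unfolding Mmod_def by blast
  qed
  thus "f \<in> Mmod vs n om \<beta>" using feq unfolding Mmod_def by simp
qed

end

theorem corollary2p15: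
  fixes vs :: "nat \<Rightarrow> real^'d" and n :: nat and hc :: "real^'d"
    and om :: "nat \<Rightarrow> real" and \<beta> :: "real^'d"
  assumes vs_lattice: "\<forall>j<n. vs j \<in> lattice"
    and vs_inj: "inj_on vs {..<n}"
    and generates: "\<forall>x \<in> lattice. \<exists>a :: nat \<Rightarrow> int. x = (\<Sum>j<n. of_int (a j) *\<^sub>R vs j)"
    and h_hom: "hc \<in> lattice"
    and h_one: "\<forall>j<n. hc \<bullet> vs j = 1"
    and triang: "regular_triangulation vs n om"
    and beta: "\<beta> \<in> lattice"
  shows "(CKint vs n \<subseteq> Mmod vs n om \<beta> \<and> Mmod vs n om \<beta> \<subseteq> CK vs n)
         \<and> (- \<beta> \<in> interior (Kcone vs n) \<longrightarrow> Mmod vs n om \<beta> = CKint vs n)"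
proof -
  interpret ctx vs n hc om
    using vs_lattice vs_inj generates h_one triang by (unfold_locales) auto
  have B: "CKint vs n \<subseteq> Mmod vs n om \<beta>" using partB[OF beta] .
  have A: "Mmod vs n om \<beta> \<subseteq> CK vs n" using partA .
  have C: "- \<beta> \<in> interior (Kcone vs n) \<longrightarrow> Mmod vs n om \<beta> = CKint vs n"
    using partC B by blast
  show ?thesis using A B C by blast
qed


end
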